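(* Let $\varepsilon>0$, $\theta_0>0$, $\Delta t>0$, $A\ge0$, $N\in\mathbb{N}$, $h=L/N$, and assume $\mathcal{M}\equiv1$. Consider the scheme: given $\phi^n,\phi^{n-1}\in\mathcal{C}_{\rm per}$, find $\phi^{n+1},\mu^{n+1}\in\mathcal{C}_{\rm per}$ with $$\frac{\tfrac32\phi^{n+1}-2\phi^n+\tfrac12\phi^{n-1}}{\Delta t}=\Delta_h\mu^{n+1},$$ $$\mu^{n+1}=\ln(1+\phi^{n+1})-\ln(1-\phi^{n+1})-\theta_0(2\phi^n-\phi^{n-1})-A\Delta t\,\Delta_h(\phi^{n+1}-\phi^n)-\varepsilon^2\Delta_h\phi^{n+1}.$$ Given $\phi^n,\phi^{n-1}\in\mathcal{C}_{\rm per}$ with $\|\phi^k\|_\infty\le M$, $k=n,n-1$, for some $M>0$, and $|\overline{\phi^n}|=|\overline{\phi^{n-1}}|<1$ with $\overline{\phi^n}=\overline{\phi^{n-1}}$, there exists a unique solution $\phi^{n+1}\in\mathcal{C}_{\rm per}$ of this scheme with $\phi^{n+1}-\overline{\phi^n}\in\mathring{\mathcal{C}}_{\rm per}$ and $\|\phi^{n+1}\|_\infty<1$.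
   Context: $\Omega=(0,L)^3$, periodic; $p_i=(i-\tfrac12)h$. $\mathcal{C}_{\rm per}$: real $N$-periodic grid functions on cell centers; $\langle\nu,\xi\rangle=h^3\sum_{i,j,k=1}^N\nu_{i,j,k}\xi_{i,j,k}$; $\overline{\nu}=|\Omega|^{-1}\langle\nu,1\rangle$; $\mathring{\mathcal{C}}_{\rm per}=\{\overline\nu=0\}$; $\|\nu\|_\infty=\max|\nu_{i,j,k}|$. $\Delta_h$: standard 7-point discrete Laplacian. $A$ is the coefficient of a Douglas–Dupont-type regularization term. *)

theory Defs
  imports Complex_Main
begin

text \<open>Grid functions on cell centres p_i = (i - 1/2) h, indexed by integers
  (i,j,k); membership in C_per is N-periodicity in each index.\<close>

type_synonym gridfun = "int \<Rightarrow> int \<Rightarrow> int \<Rightarrow> real"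

definition per :: "nat \<Rightarrow> gridfun \<Rightarrow> bool" where
  "per N \<nu> \<longleftrightarrow> (\<forall>i j k. \<nu> (i + int N) j k = \<nu> i j k \<and>
                           \<nu> i (j + int N) k = \<nu> i j k \<and>
                           \<nu> i j (k + int N) = \<nu> i j k)"

definition ginner :: "real \<Rightarrow> nat \<Rightarrow> gridfun \<Rightarrow> gridfun \<Rightarrow> real" where
  "ginner h N \<nu> \<xi> = h ^ 3 * (\<Sum>i\<in>{1..int N}. \<Sum>j\<in>{1..int N}. \<Sum>k\<in>{1..int N}.
       \<nu> i j k * \<xi> i j k)"

definition gmean :: "real \<Rightarrow> nat \<Rightarrow> gridfun \<Rightarrow> real" where
  "gmean L N \<nu> = ginner (L / real N) N \<nu> (\<lambda>_ _ _. 1) / L ^ 3"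

definition gsupnorm :: "nat \<Rightarrow> gridfun \<Rightarrow> real" where
  "gsupnorm N \<nu> = Max {\<bar>\<nu> i j k\<bar> | i j k. i \<in> {1..int N} \<and> j \<in> {1..int N} \<and> k \<in> {1..int N}}"

definition lap :: "real \<Rightarrow> gridfun \<Rightarrow> gridfun" where
  "lap h \<nu> i j k =
     (\<nu> (i + 1) j k - 2 * \<nu> i j k + \<nu> (i - 1) j k) / h ^ 2 +
     (\<nu> i (j + 1) k - 2 * \<nu> i j k + \<nu> i (j - 1) k) / h ^ 2 +
     (\<nu> i j (k + 1) - 2 * \<nu> i j k + \<nu> i j (k - 1)) / h ^ 2"

end

theory Submission
  imports Defs "HOL-Analysis.Analysis" "HOL-Real_Asymp.Real_Asymp"
begin


definition el :: "real \<Rightarrow> real" where "el y = y * ln y"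

lemma el_right: "(el \<longlongrightarrow> 0) (at_right 0)"
  unfolding el_def by real_asymp

lemma el_left: "(el \<longlongrightarrow> 0) (at_left 0)"
proof -
  have "((\<lambda>y::real. y * ln (- y)) \<longlongrightarrow> 0) (at_left 0)" by real_asymp
  then show ?thesis unfolding el_def[abs_def] by (simp add: ln_minus)
qed

lemma isCont_el: "isCont el x"
proof (cases "x = 0")
  case True
  have "(el \<longlongrightarrow> 0) (at 0)" using el_left el_right by (simp add: filterlim_split_at)
  then show ?thesis using True by (simp add: isCont_def el_def)
next
  case False
  show ?thesis
  proof (cases "x > 0")
    case True
    then show ?thesis unfolding el_def by (auto intro!: continuous_intros)
  next
    case f: False
    have "isCont (\<lambda>y. - ((- y) * ln (- y))) x" using False f by (auto intro!: continuous_intros)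
    moreover have "(\<lambda>y. - ((- y) * ln (- y))) = el" by (auto simp: el_def ln_minus fun_eq_iff)
    ultimately show ?thesis by simp
  qed
qed


lemma el_ge: assumes "y \<ge> 0" shows "el y \<ge> y - 1"
proof (cases "y = 0")
  case False
  with assms have y: "y > 0" by simp
  have "ln (1/y) \<le> 1/y - 1" using y by (intro ln_le_minus_one) simp
  then have "- ln y \<le> 1/y - 1" using y by (simp add: ln_div)
  then have "y * (- ln y) \<le> y * (1/y - 1)" using y by (intro mult_left_mono) auto
  then show ?thesis using y by (simp add: el_def algebra_simps)
qed (simp add: el_def)

lemma el_convex: "convex_on {0..} el"
proof (rule convex_onI)
  show "convex {0::real..}" by simp
next
  fix t x y :: real assume t: "0 < t" "t < 1" and xy: "x \<in> {0..}" "y \<in> {0..}"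
  have c0: "convex_on {0<..} el"
  proof (rule convex_on_realI[where f' = "\<lambda>x. ln x + 1"])
    show "connected {0::real<..}" by simp
    fix x assume "x \<in> {0::real<..}"
    then show "(el has_real_derivative ln x + 1) (at x)"
      unfolding el_def[abs_def] by (auto intro!: derivative_eq_intros)
  next
    fix x y :: real assume "x \<in> {0<..}" "y \<in> {0<..}" "x \<le> y"
    then show "ln x + 1 \<le> ln y + 1" by simp
  qed
  show "el ((1 - t) *\<^sub>R x + t *\<^sub>R y) \<le> (1 - t) * el x + t * el y"
  proof (cases "x = 0 \<or> y = 0")
    case False
    then show ?thesis using xy t by (intro convex_onD[OF c0]) auto
  next
    case True
    then show ?thesis
    proof
      assume x0: "x = 0"
      show ?thesis
      proof (cases "y = 0")
        case False
        then have yp: "y > 0" using xy by auto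
        have "ln (t * y) \<le> ln y" using yp t by (subst ln_le_cancel_iff) (auto simp: mult_le_cancel_right1 )
        then have "t * y * ln (t * y) \<le> t * y * ln y" using yp t by (intro mult_left_mono) auto
        then show ?thesis using x0 by (simp add: el_def)
      qed (simp add: x0 el_def)
    next
      assume y0: "y = 0"
      show ?thesis
      proof (cases "x = 0")
        case False
        then have xp: "x > 0" using xy by auto
        have "ln ((1-t) * x) \<le> ln x" using xp t by (subst ln_le_cancel_iff) (auto simp: mult_le_cancel_right1)
        then have "(1-t) * x * ln ((1-t) * x) \<le> (1-t) * x * ln x" using xp t by (intro mult_left_mono) auto
        then show ?thesis using y0 by (simp add: el_def)
      qed (simp add: y0 el_def)
    qed
  qed
qed

definition Fc :: "real \<Rightarrow> real" where "Fc x = el (1 + x) + el (1 - x)"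

lemma isCont_Fc: "isCont Fc x"
  unfolding Fc_def[abs_def]
  by (intro continuous_intros continuous_at_compose[OF _ isCont_el, unfolded o_def]) 

lemma Fc_nonneg: assumes "\<bar>x\<bar> \<le> 1" shows "Fc x \<ge> 0"
proof -
  have "x \<le> el (1+x)" "-x \<le> el (1-x)" using el_ge[of "1+x"] el_ge[of "1-x"] assms by auto
  then show ?thesis unfolding Fc_def by linarith
qed

lemma Fc_conv:
  assumes "\<bar>x\<bar> \<le> 1" "\<bar>y\<bar> \<le> 1" "0 \<le> t" "t \<le> 1"
  shows "Fc ((1-t)*x + t*y) \<le> (1-t) * Fc x + t * Fc y"
proof -
  have 1: "el ((1-t)*(1+x) + t*(1+y)) \<le> (1-t) * el (1+x) + t * el (1+y)"
    using convex_onD[OF el_convex, of t "1+x" "1+y"] assms by auto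
  have 2: "el ((1-t)*(1-x) + t*(1-y)) \<le> (1-t) * el (1-x) + t * el (1-y)"
    using convex_onD[OF el_convex, of t "1-x" "1-y"] assms by auto
  have "(1-t)*(1+x) + t*(1+y) = 1 + ((1-t)*x + t*y)" "(1-t)*(1-x) + t*(1-y) = 1 - ((1-t)*x + t*y)"
    by (simp_all add: algebra_simps)
  with 1 2 show ?thesis unfolding Fc_def by (simp add: algebra_simps)
qed

lemma Fc_bdry_lo: assumes "0 \<le> s" "s \<le> 2" shows "Fc (-1 + s) - Fc (-1) \<le> el s"
proof -
  have "el (2 - s) \<le> 2 * ln 2"
  proof (cases "s = 2")
    case False
    then have "ln (2 - s) \<le> ln 2" using assms by simp
    then have "(2 - s) * ln (2 - s) \<le> (2 - s) * ln 2" using assms by (intro mult_left_mono) auto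
    moreover have "(2 - s) * ln 2 \<le> 2 * ln 2" using assms ln_ge_zero[of "2::real"] by (simp add: algebra_simps)
    ultimately show ?thesis unfolding el_def by linarith
  qed (simp add: el_def)
  then show ?thesis unfolding Fc_def by (simp add: el_def)
qed

lemma Fc_bdry_hi: assumes "0 \<le> s" "s \<le> 2" shows "Fc (1 - s) - Fc 1 \<le> el s"
proof -
  have "Fc (1 - s) = Fc (-1 + s)" "Fc 1 = Fc (-1)" unfolding Fc_def by (simp_all add: algebra_simps)
  then show ?thesis using Fc_bdry_lo[OF assms] by simp
qed

definition Fp :: "real \<Rightarrow> real" where "Fp x = ln (1 + x) - ln (1 - x)"

lemma Fc_deriv: assumes "\<bar>x\<bar> < 1" shows "(Fc has_real_derivative Fp x) (at x)"
proof -
  have p: "1 + x > 0" "1 - x > 0" using assms by auto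
  have a: "((\<lambda>x. (1 + x) * ln (1 + x)) has_real_derivative (ln (1 + x) + 1)) (at x)"
    using p by (auto intro!: derivative_eq_intros)
  have b: "((\<lambda>x. (1 - x) * ln (1 - x)) has_real_derivative (- ln (1 - x) - 1)) (at x)"
    using p by (auto intro!: derivative_eq_intros)
  have "((\<lambda>x. (1 + x) * ln (1 + x) + (1 - x) * ln (1 - x)) has_real_derivative Fp x) (at x)"
    using DERIV_add[OF a b] unfolding Fp_def by simp
  then show ?thesis unfolding Fc_def[abs_def] el_def by simp
qed

lemma Fp_mono: assumes "\<bar>x\<bar> < 1" "\<bar>y\<bar> < 1" "x < y" shows "Fp x < Fp y"
proof -
  have "ln (1 + x) < ln (1 + y)" "ln (1 - y) < ln (1 - x)" using assms by auto
  then show ?thesis unfolding Fp_def by simp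
qed

lemma Fp_mono2: assumes "\<bar>x\<bar> < 1" "\<bar>y\<bar> < 1" shows "(x - y) * (Fp x - Fp y) \<ge> 0"
  and "(x - y) * (Fp x - Fp y) = 0 \<Longrightarrow> x = y"
proof -
  show "(x - y) * (Fp x - Fp y) \<ge> 0"
    using Fp_mono[OF assms] Fp_mono[OF assms(2,1)]
    by (cases x y rule: linorder_cases) (auto simp: mult_nonpos_nonpos mult_pos_pos)
  show "x = y" if "(x - y) * (Fp x - Fp y) = 0"
    using that Fp_mono[OF assms] Fp_mono[OF assms(2,1)]
    by (cases x y rule: linorder_cases) auto
qed


lemma tele_int: "(\<Sum>i\<in>{1..int n}. (f (i+1) - f i :: real)) = f (int n + 1) - f 1"
proof (induction n)
  case (Suc n)
  have "{1..int (Suc n)} = insert (int n + 1) {1..int n}" by auto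
  then show ?case using Suc by simp
qed simp

lemma shift1d:
  assumes "\<And>i. f (i + int N) = (f i :: real)"
  shows "(\<Sum>i\<in>{1..int N}. f (i+1)) = (\<Sum>i\<in>{1..int N}. f i)"
proof -
  have "(\<Sum>i\<in>{1..int N}. f (i+1)) - (\<Sum>i\<in>{1..int N}. f i) = f (int N + 1) - f 1"
    using tele_int[of f N] by (simp add: sum_subtractf)
  also have "f (int N + 1) = f 1" using assms[of 1] by (simp add: add.commute)
  finally show ?thesis by simp
qed

definition S :: "nat \<Rightarrow> gridfun \<Rightarrow> real" where
  "S N f = (\<Sum>i\<in>{1..int N}. \<Sum>j\<in>{1..int N}. \<Sum>k\<in>{1..int N}. f i j k)"

lemma S_add: "S N (\<lambda>i j k. f i j k + g i j k) = S N f + S N g"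
  by (simp add: S_def sum.distrib)
lemma S_diff: "S N (\<lambda>i j k. f i j k - g i j k) = S N f - S N g"
  by (simp add: S_def sum_subtractf)
lemma S_cmult: "S N (\<lambda>i j k. c * f i j k) = c * S N f"
  by (simp add: S_def sum_distrib_left)
lemma S_mono: "(\<And>i j k. i \<in> {1..int N} \<Longrightarrow> j \<in> {1..int N} \<Longrightarrow> k \<in> {1..int N} \<Longrightarrow> f i j k \<le> g i j k) \<Longrightarrow> S N f \<le> S N g"
  unfolding S_def by (intro sum_mono) auto
lemma S_cong: "(\<And>i j k. i \<in> {1..int N} \<Longrightarrow> j \<in> {1..int N} \<Longrightarrow> k \<in> {1..int N} \<Longrightarrow> f i j k = g i j k) \<Longrightarrow> S N f = S N g"
  unfolding S_def by (intro sum.cong) auto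
lemma S_const: "S N (\<lambda>i j k. c) = real N ^ 3 * c"
  by (simp add: S_def power3_eq_cube)
lemma S_nonneg: "(\<And>i j k. i \<in> {1..int N} \<Longrightarrow> j \<in> {1..int N} \<Longrightarrow> k \<in> {1..int N} \<Longrightarrow> 0 \<le> f i j k) \<Longrightarrow> 0 \<le> S N f"
  using S_mono[of N "\<lambda>_ _ _. 0" f] by (simp add: S_const)
lemma S_single:
  assumes "\<And>i j k. i \<in> {1..int N} \<Longrightarrow> j \<in> {1..int N} \<Longrightarrow> k \<in> {1..int N} \<Longrightarrow> 0 \<le> f i j k"
    and "a \<in> {1..int N}" "b \<in> {1..int N}" "c \<in> {1..int N}"
  shows "f a b c \<le> S N f"
proof -
  have "f a b c \<le> (\<Sum>k\<in>{1..int N}. f a b k)"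
    using assms by (intro member_le_sum) auto
  also have "\<dots> \<le> (\<Sum>j\<in>{1..int N}. \<Sum>k\<in>{1..int N}. f a j k)"
    using assms by (intro member_le_sum[where f = "\<lambda>j. \<Sum>k\<in>{1..int N}. f a j k"] sum_nonneg) auto
  also have "\<dots> \<le> S N f" unfolding S_def
    using assms by (intro member_le_sum[where f = "\<lambda>i. \<Sum>j\<in>{1..int N}. \<Sum>k\<in>{1..int N}. f i j k"] sum_nonneg) auto
  finally show ?thesis .
qed

lemma sh1: assumes "\<And>i j k. f (i + int N) j k = f i j k"
  shows "S N (\<lambda>i j k. f (i+1) j k) = S N f"
  unfolding S_def using assms by (intro shift1d[where f = "\<lambda>i. \<Sum>j\<in>{1..int N}. \<Sum>k\<in>{1..int N}. f i j k"]) simp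
lemma sh2: assumes "\<And>i j k. f i (j + int N) k = f i j k"
  shows "S N (\<lambda>i j k. f i (j+1) k) = S N f"
  unfolding S_def using assms by (intro sum.cong refl shift1d[where f = "\<lambda>j. \<Sum>k\<in>{1..int N}. f _ j k"]) simp
lemma sh3: assumes "\<And>i j k. f i j (k + int N) = f i j k"
  shows "S N (\<lambda>i j k. f i j (k+1)) = S N f"
  unfolding S_def using assms by (intro sum.cong refl shift1d) simp

definition D1 :: "gridfun \<Rightarrow> gridfun" where "D1 u i j k = u (i+1) j k - u i j k"
definition D2 :: "gridfun \<Rightarrow> gridfun" where "D2 u i j k = u i (j+1) k - u i j k"
definition D3 :: "gridfun \<Rightarrow> gridfun" where "D3 u i j k = u i j (k+1) - u i j k"

definition GE :: "nat \<Rightarrow> gridfun \<Rightarrow> gridfun \<Rightarrow> real" where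
  "GE N u v = S N (\<lambda>i j k. D1 u i j k * D1 v i j k + D2 u i j k * D2 v i j k + D3 u i j k * D3 v i j k)"

lemma sbp:
  assumes u: "per N u" and v: "per N v"
  shows "S N (\<lambda>i j k. lap h u i j k * v i j k) = - GE N u v / h^2"
proof -
  have p: "\<And>i j k. u (i + int N) j k = u i j k" "\<And>i j k. u i (j + int N) k = u i j k"
    "\<And>i j k. u i j (k + int N) = u i j k"
    "\<And>i j k. v (i + int N) j k = v i j k" "\<And>i j k. v i (j + int N) k = v i j k"
    "\<And>i j k. v i j (k + int N) = v i j k"
    using u v unfolding per_def by auto
  have m: "\<And>i j k. u (i + int N - 1) j k = u (i - 1) j k" "\<And>i j k. u i (j + int N - 1) k = u i (j - 1) k"
    "\<And>i j k. u i j (k + int N - 1) = u i j (k - 1)"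
    using p(1)[of "_ - 1"] p(2)[of _ "_ - 1"] p(3)[of _ _ "_ - 1"] by (simp_all add: algebra_simps)
  have e1: "S N (\<lambda>i j k. D1 u (i - 1) j k * v i j k) = S N (\<lambda>i j k. D1 u i j k * v (i+1) j k)"
    using sh1[where N=N and f="\<lambda>i j k. D1 u (i - 1) j k * v i j k"] p m by (simp add: D1_def algebra_simps)
  have e2: "S N (\<lambda>i j k. D2 u i (j - 1) k * v i j k) = S N (\<lambda>i j k. D2 u i j k * v i (j+1) k)"
    using sh2[where N=N and f="\<lambda>i j k. D2 u i (j - 1) k * v i j k"] p m by (simp add: D2_def algebra_simps)
  have e3: "S N (\<lambda>i j k. D3 u i j (k - 1) * v i j k) = S N (\<lambda>i j k. D3 u i j k * v i j (k+1))"
    using sh3[where N=N and f="\<lambda>i j k. D3 u i j (k - 1) * v i j k"] p m by (simp add: D3_def algebra_simps)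
  have pt: "lap h u i j k * v i j k = (1/h^2) * ((D1 u i j k * v i j k - D1 u (i - 1) j k * v i j k)
     + (D2 u i j k * v i j k - D2 u i (j - 1) k * v i j k) + (D3 u i j k * v i j k - D3 u i j (k - 1) * v i j k))"
    for i j k
    by (cases "h = 0") (simp_all add: lap_def D1_def D2_def D3_def field_simps)
  have "S N (\<lambda>i j k. lap h u i j k * v i j k) = (1/h^2) * ((S N (\<lambda>i j k. D1 u i j k * v i j k) - S N (\<lambda>i j k. D1 u (i - 1) j k * v i j k))
     + (S N (\<lambda>i j k. D2 u i j k * v i j k) - S N (\<lambda>i j k. D2 u i (j - 1) k * v i j k))
     + (S N (\<lambda>i j k. D3 u i j k * v i j k) - S N (\<lambda>i j k. D3 u i j (k - 1) * v i j k)))"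
    unfolding pt S_cmult[symmetric] S_add[symmetric] S_diff[symmetric] ..
  also have "\<dots> = (1/h^2) * (- GE N u v)"
    unfolding e1 e2 e3 GE_def S_diff[symmetric] S_add[symmetric]
    by (rule arg_cong[where f = "\<lambda>x. _ * x"], simp add: S_def sum_negf[symmetric], intro sum.cong refl)
       (simp add: D1_def D2_def D3_def algebra_simps)
  finally show ?thesis by simp
qed

lemma GE_sym: "GE N u v = GE N v u"
  unfolding GE_def by (simp add: mult.commute)

lemma sym_lap: assumes "per N u" "per N v"
  shows "S N (\<lambda>i j k. lap h u i j k * v i j k) = S N (\<lambda>i j k. u i j k * lap h v i j k)"
  using sbp[OF assms, where h=h] sbp[OF assms(2,1), where h=h] GE_sym[where N=N and u=u and v=v]
  by (simp add: mult.commute)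

lemma GE_nonneg: "GE N u u \<ge> 0"
  unfolding GE_def by (intro S_nonneg) auto


lemma per_shift_gen:
  assumes "\<And>i. f (i + int N) = (f i :: real)"
  shows "f (i + int N * m) = f i"
proof (induction m rule: int_induct[where k = 0])
  case (step1 m)
  have "f (i + int N * (m + 1)) = f ((i + int N * m) + int N)" by (simp add: algebra_simps)
  then show ?case using assms step1 by simp
next
  case (step2 m)
  have "f (i + int N * m) = f ((i + int N * (m - 1)) + int N)" by (simp add: algebra_simps)
  then show ?case using assms step2 by simp
qed simp

definition cm :: "nat \<Rightarrow> int \<Rightarrow> int" where "cm N i = (i - 1) mod int N + 1"

lemma cm_range: assumes "N > 0" shows "cm N i \<in> {1..int N}"
proof -
  have "0 < int N" using assms by simp
  then have "(i - 1) mod int N < int N" "0 \<le> (i - 1) mod int N" by simp_all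
  then show ?thesis unfolding cm_def by simp
qed

lemma cm_id: "i \<in> {1..int N} \<Longrightarrow> cm N i = i"
  unfolding cm_def by auto

lemma cm_shift: "cm N (i + int N) = cm N i"
proof -
  have e: "i + int N - 1 = (i - 1) + int N" by simp
  show ?thesis unfolding cm_def e by simp
qed

lemma cm_decomp: "i = cm N i + int N * ((i - 1) div int N)"
  unfolding cm_def using mod_mult_div_eq[of "i - 1" "int N"] by linarith

lemma per_cm1: assumes "\<And>i. f (i + int N) = (f i :: real)" shows "f i = f (cm N i)"
  using cm_decomp[of i N] per_shift_gen[where N=N and f=f, OF assms, where i="cm N i" and m="(i - 1) div int N"] by simp

lemma per_cm:
  assumes "per N f" shows "f i j k = f (cm N i) (cm N j) (cm N k)"
proof -
  have "f i j k = f (cm N i) j k" using per_cm1[where N=N and f="\<lambda>i. f i j k" and i=i] assms unfolding per_def by simp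
  also have "\<dots> = f (cm N i) (cm N j) k" using per_cm1[where N=N and f="\<lambda>j. f (cm N i) j k" and i=j] assms unfolding per_def by simp
  also have "\<dots> = f (cm N i) (cm N j) (cm N k)" using per_cm1[where N=N and f="\<lambda>k. f (cm N i) (cm N j) k" and i=k] assms unfolding per_def by simp
  finally show ?thesis .
qed

lemma per_eqI:
  assumes "per N f" "per N g"
    "\<And>i j k. i \<in> {1..int N} \<Longrightarrow> j \<in> {1..int N} \<Longrightarrow> k \<in> {1..int N} \<Longrightarrow> f i j k = g i j k"
    "N > 0"
  shows "f = g"
proof (intro ext)
  fix i j k
  show "f i j k = g i j k"
    using per_cm[OF assms(1), of i j k] per_cm[OF assms(2), of i j k] assms(3)[OF cm_range cm_range cm_range, OF assms(4) assms(4) assms(4)]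
    by simp
qed

lemma perD:
  assumes "per N f"
  shows "f (i + int N) j k = f i j k" "f i (j + int N) k = f i j k" "f i j (k + int N) = f i j k"
  using assms unfolding per_def by auto

lemma perD':
  assumes "per N f"
  shows "f (i + int N + c) j k = f (i + c) j k" "f i (j + int N + c) k = f i (j + c) k" "f i j (k + int N + c) = f i j (k + c)"
  "f (i + int N - c) j k = f (i - c) j k" "f i (j + int N - c) k = f i (j - c) k" "f i j (k + int N - c) = f i j (k - c)"
  using perD[OF assms, of "i + c"] perD[OF assms, of _ "j + c"] perD[OF assms, of _ _ "k + c"]
   perD[OF assms, of "i - c"] perD[OF assms, of _ "j - c"] perD[OF assms, of _ _ "k - c"]
  by (simp_all add: algebra_simps)

lemma per_lap: assumes "per N u" shows "per N (lap h u)"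
  unfolding per_def[of N "lap h u"] lap_def using perD[OF assms] perD'[OF assms, where c=1] by simp

lemma per_const: "per N (\<lambda>i j k. c)" unfolding per_def by simp

lemma per_comb: "per N f \<Longrightarrow> per N g \<Longrightarrow> per N (\<lambda>i j k. F (f i j k) (g i j k))"
  unfolding per_def by simp

lemma per_comp: "per N f \<Longrightarrow> per N (\<lambda>i j k. F (f i j k))"
  unfolding per_def by simp

definition dl :: "nat \<Rightarrow> int \<Rightarrow> int \<Rightarrow> int \<Rightarrow> gridfun" where
  "dl N a b c i j k = (if cm N i = a \<and> cm N j = b \<and> cm N k = c then 1 else 0)"

lemma per_dl: "per N (dl N a b c)"
  unfolding per_def dl_def by (simp add: cm_shift)

lemma S_dl:
  assumes "a \<in> {1..int N}" "b \<in> {1..int N}" "c \<in> {1..int N}"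
  shows "S N (\<lambda>i j k. f i j k * dl N a b c i j k) = f a b c"
proof -
  have "S N (\<lambda>i j k. f i j k * dl N a b c i j k) = S N (\<lambda>i j k. if k = c then (if j = b then (if i = a then f a b c else 0) else 0) else 0)"
    by (rule S_cong) (auto simp: dl_def cm_id)
  also have "\<dots> = f a b c"
    using assms by (simp add: S_def sum.delta)
  finally show ?thesis .
qed

lemma dl_bound: "\<bar>dl N a b c i j k\<bar> \<le> 1"
  unfolding dl_def by auto


lemma per_D: assumes "per N w" shows "per N (D1 w)" "per N (D2 w)" "per N (D3 w)"
  unfolding per_def D1_def D2_def D3_def using perD[OF assms] perD'[OF assms, where c=1] by simp_all

lemma D_bound:
  assumes "per N w" "N > 0"
  shows "\<bar>D1 w i j k\<bar> \<le> sqrt (GE N w w)" "\<bar>D2 w i j k\<bar> \<le> sqrt (GE N w w)" "\<bar>D3 w i j k\<bar> \<le> sqrt (GE N w w)"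
proof -
  let ?a = "cm N i" and ?b = "cm N j" and ?c = "cm N k"
  have r: "?a \<in> {1..int N}" "?b \<in> {1..int N}" "?c \<in> {1..int N}" using cm_range assms by auto
  have le: "(\<lambda>i j k. D1 w i j k * D1 w i j k + D2 w i j k * D2 w i j k + D3 w i j k * D3 w i j k) ?a ?b ?c \<le> GE N w w"
    unfolding GE_def by (rule S_single[OF _ r]) auto
  have eqs: "D1 w i j k = D1 w ?a ?b ?c" "D2 w i j k = D2 w ?a ?b ?c" "D3 w i j k = D3 w ?a ?b ?c"
    using per_cm[OF per_D(1)[OF assms(1)]] per_cm[OF per_D(2)[OF assms(1)]] per_cm[OF per_D(3)[OF assms(1)]] by auto
  have q: "0 \<le> D1 w ?a ?b ?c * D1 w ?a ?b ?c" "0 \<le> D2 w ?a ?b ?c * D2 w ?a ?b ?c" "0 \<le> D3 w ?a ?b ?c * D3 w ?a ?b ?c"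
    by simp_all
  have "(D1 w i j k)^2 \<le> GE N w w" "(D2 w i j k)^2 \<le> GE N w w" "(D3 w i j k)^2 \<le> GE N w w"
    unfolding power2_eq_square eqs using le q by linarith+
  then show "\<bar>D1 w i j k\<bar> \<le> sqrt (GE N w w)" "\<bar>D2 w i j k\<bar> \<le> sqrt (GE N w w)" "\<bar>D3 w i j k\<bar> \<le> sqrt (GE N w w)"
    by (simp_all add: real_le_rsqrt)
qed

lemma path1:
  assumes "\<And>i j k. \<bar>D1 w i j k\<bar> \<le> m"
  shows "\<bar>w (i + int t) j k - w i j k\<bar> \<le> real t * m"
proof (induction t)
  case (Suc t)
  have "w (i + int (Suc t)) j k - w i j k = D1 w (i + int t) j k + (w (i + int t) j k - w i j k)"
    by (simp add: D1_def algebra_simps)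
  then show ?case using Suc assms[of "i + int t" j k] by (simp add: algebra_simps)
qed simp

lemma path2:
  assumes "\<And>i j k. \<bar>D2 w i j k\<bar> \<le> m"
  shows "\<bar>w i (j + int t) k - w i j k\<bar> \<le> real t * m"
proof (induction t)
  case (Suc t)
  have "w i (j + int (Suc t)) k - w i j k = D2 w i (j + int t) k + (w i (j + int t) k - w i j k)"
    by (simp add: D2_def algebra_simps)
  then show ?case using Suc assms[of i "j + int t" k] by (simp add: algebra_simps)
qed simp

lemma path3:
  assumes "\<And>i j k. \<bar>D3 w i j k\<bar> \<le> m"
  shows "\<bar>w i j (k + int t) - w i j k\<bar> \<le> real t * m"
proof (induction t)
  case (Suc t)
  have "w i j (k + int (Suc t)) - w i j k = D3 w i j (k + int t) + (w i j (k + int t) - w i j k)"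
    by (simp add: D3_def algebra_simps)
  then show ?case using Suc assms[of i j "k + int t"] by (simp add: algebra_simps)
qed simp

lemma poincare:
  assumes "per N w" "N > 0" "w 1 1 1 = 0" "a \<in> {1..int N}" "b \<in> {1..int N}" "c \<in> {1..int N}"
  shows "\<bar>w a b c\<bar> \<le> 3 * real N * sqrt (GE N w w)"
proof -
  let ?m = "sqrt (GE N w w)"
  have m0: "?m \<ge> 0" using GE_nonneg by simp
  define ta where "ta = nat (a - 1)"
  define tb where "tb = nat (b - 1)"
  define tc where "tc = nat (c - 1)"
  have t: "a = 1 + int ta" "b = 1 + int tb" "c = 1 + int tc" "ta \<le> N" "tb \<le> N" "tc \<le> N"
    using assms unfolding ta_def tb_def tc_def by auto
  have 1: "\<bar>w a b c - w 1 b c\<bar> \<le> real N * ?m"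
    using path1[OF D_bound(1)[OF assms(1,2)], of 1 ta b c] t m0
    by (smt (verit) mult_right_mono of_nat_le_iff)
  have 2: "\<bar>w 1 b c - w 1 1 c\<bar> \<le> real N * ?m"
    using path2[OF D_bound(2)[OF assms(1,2)], of 1 1 tb c] t m0
    by (smt (verit) mult_right_mono of_nat_le_iff)
  have 3: "\<bar>w 1 1 c - w 1 1 1\<bar> \<le> real N * ?m"
    using path3[OF D_bound(3)[OF assms(1,2)], of 1 1 1 tc] t m0
    by (smt (verit) mult_right_mono of_nat_le_iff)
  show ?thesis using 1 2 3 assms(3) by linarith
qed


type_synonym vec = "int \<times> int \<times> int \<Rightarrow> real"

definition GG :: "nat \<Rightarrow> (int \<times> int \<times> int) set" where
  "GG N = {1..int N} \<times> {1..int N} \<times> {1..int N}"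

definition ext :: "nat \<Rightarrow> vec \<Rightarrow> gridfun" where
  "ext N x i j k = x (cm N i, cm N j, cm N k)"

definition res :: "nat \<Rightarrow> gridfun \<Rightarrow> vec" where
  "res N w = restrict (\<lambda>(i,j,k). w i j k) (GG N)"

lemma per_ext: "per N (ext N x)"
  unfolding per_def ext_def by (simp add: cm_shift)

lemma ext_res: assumes "per N w" "N > 0" shows "ext N (res N w) = w"
proof (intro ext)
  fix i j k
  show "ext N (res N w) i j k = w i j k"
    using per_cm[OF assms(1), of i j k] cm_range[OF assms(2)] unfolding ext_def res_def GG_def by simp
qed

lemma ext_G: "(i,j,k) \<in> GG N \<Longrightarrow> ext N x i j k = x (i,j,k)"
  unfolding ext_def GG_def by (simp add: cm_id)

lemma compact_box: "compact (PiE (GG N) (\<lambda>_. {-R..R::real}))"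
proof -
  have e: "PiE (GG N) (\<lambda>_. {-R..R}) = PiE UNIV (\<lambda>p. if p \<in> GG N then {-R..R} else {undefined})"
    by (auto simp: PiE_iff extensional_def split: if_splits)
  have "compactin (product_topology (\<lambda>_. euclidean) UNIV) (PiE UNIV (\<lambda>p. if p \<in> GG N then {-R..R::real} else {undefined}))"
    by (subst compactin_PiE) auto
  then show ?thesis unfolding e euclidean_product_topology by simp
qed

lemma res_box:
  assumes "\<And>i j k. (i,j,k) \<in> GG N \<Longrightarrow> \<bar>w i j k\<bar> \<le> R"
  shows "res N w \<in> PiE (GG N) (\<lambda>_. {-R..R})"
  unfolding res_def by (auto simp: PiE_iff abs_le_iff dest!: assms)

lemma cont_ext [continuous_intros]: "continuous_on A (\<lambda>x. ext N x i j k)"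
  unfolding ext_def by (rule continuous_on_subset[OF continuous_on_product_coordinates]) simp

lemma min_exists:
  fixes J :: "gridfun \<Rightarrow> real" and Dm :: "gridfun \<Rightarrow> bool"
  assumes N: "N > 0"
    and cl: "closed {x. Dm (ext N x)}"
    and co: "continuous_on (PiE (GG N) (\<lambda>_. {-R..R}) \<inter> {x. Dm (ext N x)}) (\<lambda>x. J (ext N x))"
    and wz: "per N wz" "Dm wz"
    and bd: "\<And>w i j k. per N w \<Longrightarrow> Dm w \<Longrightarrow> J w \<le> J wz \<Longrightarrow> (i,j,k) \<in> GG N \<Longrightarrow> \<bar>w i j k\<bar> \<le> R"
  shows "\<exists>wm. per N wm \<and> Dm wm \<and> (\<forall>w. per N w \<longrightarrow> Dm w \<longrightarrow> J wm \<le> J w)"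
proof -
  let ?K = "PiE (GG N) (\<lambda>_. {-R..R}) \<inter> {x. Dm (ext N x)}"
  have K: "compact ?K" using compact_box cl by (rule compact_Int_closed)
  have r0: "res N wz \<in> ?K" using res_box[OF bd[OF wz order.refl]] ext_res[OF wz(1) N] wz by auto
  then have "?K \<noteq> {}" by auto
  from continuous_attains_inf[OF K this co] obtain xm where xm: "xm \<in> ?K" "\<And>y. y \<in> ?K \<Longrightarrow> J (ext N xm) \<le> J (ext N y)"
    by auto
  show ?thesis
  proof (intro exI conjI allI impI)
    show "per N (ext N xm)" by (rule per_ext)
    show "Dm (ext N xm)" using xm by auto
    fix w assume w: "per N w" "Dm w"
    show "J (ext N xm) \<le> J w"
    proof (cases "J w \<le> J wz")
      case True
      have "res N w \<in> ?K" using res_box[OF bd[OF w True]] ext_res[OF w(1) N] w by auto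
      then show ?thesis using xm(2) ext_res[OF w(1) N] by force
    next
      case False
      have "J (ext N xm) \<le> J wz" using xm(2)[OF r0] ext_res[OF wz(1) N] by simp
      then show ?thesis using False by simp
    qed
  qed
qed




lemma quad0:
  fixes al be :: real
  assumes "\<And>t. 0 \<le> t * al + t^2 * be"
  shows "al = 0"
proof (rule ccontr)
  assume a: "al \<noteq> 0"
  define c where "c = \<bar>be\<bar> + 1"
  have c: "c > 0" "be \<le> c" unfolding c_def by auto
  define t where "t = - al / (2 * c)"
  have 1: "t^2 * be \<le> t^2 * c" using c by (intro mult_left_mono) auto
  have 2: "t * al + t^2 * c = - (al * al) / (4 * c)" unfolding t_def power2_eq_square using c
    by (simp add: divide_simps)
  have "0 < al * al" using a not_real_square_gt_zero by blast
  then have "0 < (al * al) / (4 * c)" using c by (intro divide_pos_pos) auto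
  then have 3: "- (al * al) / (4 * c) < 0" by simp
  show False using assms[of t] 1 2 3 by linarith
qed

definition cg :: "'a::topological_space set \<Rightarrow> ('a \<Rightarrow> gridfun) \<Rightarrow> bool" where
  "cg A U \<longleftrightarrow> (\<forall>i j k. continuous_on A (\<lambda>x. U x i j k))"

lemma cgD: "cg A U \<Longrightarrow> continuous_on A (\<lambda>x. U x i j k)"
  unfolding cg_def by blast

lemma cont_S: "cg A U \<Longrightarrow> continuous_on A (\<lambda>x. S N (U x))"
  unfolding S_def by (intro continuous_on_sum cgD)

lemma cg_ext: "cg A (\<lambda>x. ext N x)"
  unfolding cg_def by (auto intro: cont_ext)

lemma cg_const: "cg A (\<lambda>x. f)"
  unfolding cg_def by auto

lemma cg_add: "cg A U \<Longrightarrow> cg A V \<Longrightarrow> cg A (\<lambda>x i j k. U x i j k + V x i j k)"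
  unfolding cg_def by (auto intro: continuous_intros)
lemma cg_diff: "cg A U \<Longrightarrow> cg A V \<Longrightarrow> cg A (\<lambda>x i j k. U x i j k - V x i j k)"
  unfolding cg_def by (auto intro: continuous_intros)
lemma cg_mult: "cg A U \<Longrightarrow> cg A V \<Longrightarrow> cg A (\<lambda>x i j k. U x i j k * V x i j k)"
  unfolding cg_def by (auto intro: continuous_intros)
lemma cg_cmult: "cg A U \<Longrightarrow> cg A (\<lambda>x i j k. c * U x i j k)"
  unfolding cg_def by (auto intro: continuous_intros)

lemma cg_lap: "cg A U \<Longrightarrow> cg A (\<lambda>x. lap h (U x))"
  unfolding cg_def lap_def divide_inverse by (auto intro!: continuous_intros)

lemma cont_GE: "cg A U \<Longrightarrow> cg A V \<Longrightarrow> continuous_on A (\<lambda>x. GE N (U x) (V x))"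
  unfolding GE_def by (intro cont_S) (auto simp: cg_def D1_def D2_def D3_def intro!: continuous_intros)

lemma arith1: "h \<noteq> 0 \<Longrightarrow> (A + 2*t*B + t^2*C)/(2*h^2) + (D + t*F) = (A/(2*h^2) + D) + t*(B/h^2 + F) + t^2*(C/(2*h^2::real))"
  by (simp add: field_simps power2_eq_square)

lemma GE_bilin:
  "GE N (\<lambda>i j k. u i j k + t * v i j k) (\<lambda>i j k. u i j k + t * v i j k) = GE N u u + 2 * t * GE N u v + t^2 * GE N v v"
proof -
  have "GE N (\<lambda>i j k. u i j k + t * v i j k) (\<lambda>i j k. u i j k + t * v i j k) =
    S N (\<lambda>i j k. (\<lambda>i j k. D1 u i j k * D1 u i j k + D2 u i j k * D2 u i j k + D3 u i j k * D3 u i j k) i j k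
       + (2 * t) * (\<lambda>i j k. D1 u i j k * D1 v i j k + D2 u i j k * D2 v i j k + D3 u i j k * D3 v i j k) i j k
       + t^2 * (\<lambda>i j k. D1 v i j k * D1 v i j k + D2 v i j k * D2 v i j k + D3 v i j k * D3 v i j k) i j k)"
    unfolding GE_def by (rule S_cong) (simp add: D1_def D2_def D3_def power2_eq_square algebra_simps)
  also have "\<dots> = GE N u u + 2 * t * GE N u v + t^2 * GE N v v"
    unfolding S_add S_cmult GE_def ..
  finally show ?thesis .
qed

lemma S_lap0: assumes "per N u" shows "S N (lap h u) = 0"
proof -
  have "S N (\<lambda>i j k. lap h u i j k * (\<lambda>i j k. 1) i j k) = - GE N u (\<lambda>i j k. 1) / h^2"
    by (rule sbp[OF assms per_const])
  moreover have "GE N u (\<lambda>i j k. 1) = 0" unfolding GE_def D1_def D2_def D3_def S_def by simp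
  ultimately show ?thesis by simp
qed

lemma zero_from_sum:
  assumes "per N g" "N > 0" "S N g = 0"
    and "\<And>a b c. (a,b,c) \<in> GG N \<Longrightarrow> (a,b,c) \<noteq> (1,1,1) \<Longrightarrow> g a b c = 0"
  shows "g = (\<lambda>i j k. 0)"
proof -
  have o: "(1::int) \<in> {1..int N}" using assms(2) by simp
  have "S N g = S N (\<lambda>i j k. g 1 1 1 * dl N 1 1 1 i j k)"
    using assms(4) by (intro S_cong) (auto simp: dl_def cm_id GG_def)
  also have "\<dots> = g 1 1 1" using S_dl[OF o o o, of "\<lambda>_ _ _. g 1 1 1"] by simp
  finally have g0: "g 1 1 1 = 0" using assms(3) by simp
  show ?thesis
    by (rule per_eqI[OF assms(1) per_const _ assms(2)]) (use assms(4) g0 in \<open>force simp: GG_def\<close>)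
qed

lemma poisson:
  assumes N: "N > 0" and h: "h \<noteq> 0" and f: "per N f" "S N f = 0"
  shows "\<exists>u. per N u \<and> u 1 1 1 = 0 \<and> lap h u = f"
proof -
  define E where "E u = GE N u u / (2 * h^2) + S N (\<lambda>i j k. f i j k * u i j k)" for u
  define Dm where "Dm u = (u 1 1 1 = 0)" for u :: gridfun
  define F1 where "F1 = S N (\<lambda>i j k. \<bar>f i j k\<bar>)"
  define R where "R = 3 * real N * (6 * real N * h^2 * F1)"
  have h2: "h^2 > 0" using h by simp
  have "\<exists>wm. per N wm \<and> Dm wm \<and> (\<forall>w. per N w \<longrightarrow> Dm w \<longrightarrow> E wm \<le> E w)"
  proof (rule min_exists[OF N, where wz = "\<lambda>i j k. 0" and R = R])
    show "closed {x. Dm (ext N x)}" unfolding Dm_def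
      by (intro closed_Collect_eq continuous_intros)
    show "continuous_on (PiE (GG N) (\<lambda>_. {-R..R}) \<inter> {x. Dm (ext N x)}) (\<lambda>x. E (ext N x))"
      unfolding E_def
      by (intro continuous_intros cont_GE cont_S cg_ext cg_mult cg_const) (simp add: h)
    show "per N (\<lambda>i j k. 0)" by (rule per_const)
    show "Dm (\<lambda>i j k. 0)" unfolding Dm_def by simp
  next
    fix w i j k assume w: "per N w" "Dm w" "E w \<le> E (\<lambda>i j k. 0)" and p: "(i, j, k) \<in> GG N"
    let ?m = "sqrt (GE N w w)"
    have pc: "\<And>a b c. (a,b,c) \<in> GG N \<Longrightarrow> \<bar>w a b c\<bar> \<le> 3 * real N * ?m"
      using poincare[OF w(1) N] w(2) unfolding Dm_def GG_def by auto
    have m0: "?m \<ge> 0" using GE_nonneg by simp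
    have "E (\<lambda>i j k. 0) = 0" unfolding E_def GE_def D1_def D2_def D3_def S_def by simp
    then have "GE N w w / (2 * h^2) \<le> - S N (\<lambda>i j k. f i j k * w i j k)" using w(3) unfolding E_def by simp
    also have "\<dots> = S N (\<lambda>i j k. - (f i j k * w i j k))" by (simp add: S_def sum_negf)
    also have "\<dots> \<le> S N (\<lambda>i j k. \<bar>f i j k\<bar> * (3 * real N * ?m))"
    proof (rule S_mono)
      fix a b c assume abc: "a \<in> {1..int N}" "b \<in> {1..int N}" "c \<in> {1..int N}"
      then have a: "\<bar>w a b c\<bar> \<le> 3 * real N * ?m" using pc[of a b c] unfolding GG_def by auto
      have "- (f a b c * w a b c) \<le> \<bar>f a b c\<bar> * \<bar>w a b c\<bar>" by (simp add: abs_mult[symmetric])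
      also have "\<dots> \<le> \<bar>f a b c\<bar> * (3 * real N * ?m)" using a by (intro mult_left_mono) auto
      finally show "- (f a b c * w a b c) \<le> \<bar>f a b c\<bar> * (3 * real N * ?m)" .
    qed
    also have "\<dots> = F1 * (3 * real N * ?m)" unfolding F1_def S_def sum_distrib_right by simp
    finally have "?m^2 / (2 * h^2) \<le> F1 * (3 * real N * ?m)" using GE_nonneg[of N w] by simp
    then have mm: "?m * ?m \<le> (6 * real N * h^2 * F1) * ?m" using h2 by (simp add: field_simps power2_eq_square)
    have K0: "0 \<le> 6 * real N * h^2 * F1" unfolding F1_def by (intro mult_nonneg_nonneg S_nonneg) auto
    have "?m \<le> 6 * real N * h^2 * F1"
    proof (cases "?m = 0")
      case True then show ?thesis using K0 by simp
    next
      case False then have "?m > 0" using m0 by simp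
      from mult_right_le_imp_le[OF mm this] show ?thesis .
    qed
    then have "3 * real N * ?m \<le> 3 * real N * (6 * real N * h^2 * F1)" by (intro mult_left_mono) auto
    then show "\<bar>w i j k\<bar> \<le> R" unfolding R_def using pc[OF p] by linarith
  qed
  then obtain u where u: "per N u" "u 1 1 1 = 0" "\<And>w. per N w \<Longrightarrow> w 1 1 1 = 0 \<Longrightarrow> E u \<le> E w"
    unfolding Dm_def by blast
  have "lap h u a b c = f a b c" if ab: "(a,b,c) \<in> GG N" "(a,b,c) \<noteq> (1,1,1)" for a b c
  proof -
    let ?d = "dl N a b c"
    have abc: "a \<in> {1..int N}" "b \<in> {1..int N}" "c \<in> {1..int N}" using ab unfolding GG_def by auto
    have d0: "?d 1 1 1 = 0" using ab abc by (auto simp: dl_def cm_id)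
    have "0 \<le> t * (f a b c - lap h u a b c) + t^2 * (GE N ?d ?d / (2 * h^2))" for t
    proof -
      have pw: "per N (\<lambda>i j k. u i j k + t * ?d i j k)" by (rule per_comb[OF u(1) per_dl])
      have "E u \<le> E (\<lambda>i j k. u i j k + t * ?d i j k)" by (rule u(3)[OF pw]) (simp add: u(2) d0)
      also have "E (\<lambda>i j k. u i j k + t * ?d i j k) = E u + t * (GE N u ?d / h^2 + S N (\<lambda>i j k. f i j k * ?d i j k)) + t^2 * (GE N ?d ?d / (2 * h^2))"
      proof -
        have "S N (\<lambda>i j k. f i j k * (u i j k + t * ?d i j k)) = S N (\<lambda>i j k. f i j k * u i j k) + t * S N (\<lambda>i j k. f i j k * ?d i j k)"
          unfolding S_add[symmetric] S_cmult[symmetric] by (rule S_cong) (simp add: algebra_simps)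
        then show ?thesis unfolding E_def GE_bilin using arith1[OF h] by simp
      qed


      also have "GE N u ?d / h^2 = - S N (\<lambda>i j k. lap h u i j k * ?d i j k)" using sbp[OF u(1) per_dl, where h=h] by simp
      also have "\<dots> = - lap h u a b c" using S_dl[OF abc] by simp
      also have "S N (\<lambda>i j k. f i j k * ?d i j k) = f a b c" using S_dl[OF abc] by simp
      finally show ?thesis by (simp add: algebra_simps)
    qed
    then have "f a b c - lap h u a b c = 0" by (rule quad0)
    then show ?thesis by simp
  qed
  then have pt: "\<And>a b c. (a,b,c) \<in> GG N \<Longrightarrow> (a,b,c) \<noteq> (1,1,1) \<Longrightarrow> lap h u a b c - f a b c = 0" by simp
  have s0: "S N (\<lambda>i j k. lap h u i j k - f i j k) = 0"
    using S_diff[of N "lap h u" f] S_lap0[OF u(1)] f(2) by simp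
  have "(\<lambda>i j k. lap h u i j k - f i j k) = (\<lambda>i j k. 0)"
    by (rule zero_from_sum[OF per_comb[OF per_lap[OF u(1)] f(1)] N s0 pt])
  then have "lap h u = f" by (auto simp: fun_eq_iff)
  then show ?thesis using u by blast
qed



lemma lap_lin: "lap h (\<lambda>i j k. u i j k + t * v i j k) i j k = lap h u i j k + t * lap h v i j k"
  by (simp add: lap_def divide_inverse algebra_simps)

lemma lap_diff: "lap h (\<lambda>i j k. u i j k - v i j k) i j k = lap h u i j k - lap h v i j k"
  by (simp add: lap_def divide_inverse algebra_simps)

lemma DERIV_S:
  assumes "\<And>i j k. i \<in> {1..int N} \<Longrightarrow> j \<in> {1..int N} \<Longrightarrow> k \<in> {1..int N} \<Longrightarrow> ((\<lambda>t. F t i j k) has_real_derivative F' i j k) (at x)"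
  shows "((\<lambda>t. S N (F t)) has_real_derivative S N F') (at x)"
  unfolding S_def using assms by (intro DERIV_sum) auto

lemma cg_Fc: "cg A U \<Longrightarrow> cg A (\<lambda>x i j k. Fc (U x i j k))"
  unfolding cg_def
  by (auto intro!: continuous_on_compose2[OF continuous_at_imp_continuous_on[of UNIV Fc]] isCont_Fc)

locale sch =
  fixes N :: nat and h eps th0 dt A :: real and pn pm :: gridfun
  assumes N: "N > 0" and h: "h > 0" and dt: "dt > 0" and A: "A \<ge> 0" and th0: "th0 > 0"
    and ppn: "per N pn" and ppm: "per N pm" and Seq: "S N pn = S N pm"
    and mean: "\<bar>S N pn / real N ^ 3\<bar> < 1"
begin

definition "g = (\<lambda>i j k. 2 * pn i j k - (1/2) * pm i j k)"
definition "q = (\<lambda>i j k. 2 * pn i j k - pm i j k)"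
definition "ca = 2 * dt / 3"
definition "psi w = (\<lambda>i j k. (2/3) * (g i j k + dt * lap h w i j k))"
definition "mu w = (\<lambda>i j k. ln (1 + psi w i j k) - ln (1 - psi w i j k) - th0 * (2 * pn i j k - pm i j k)
   - A * dt * lap h (\<lambda>a b c. psi w a b c - pn a b c) i j k - eps^2 * lap h (psi w) i j k)"
definition "J w = S N (\<lambda>i j k. Fc (psi w i j k)) - th0 * S N (\<lambda>i j k. q i j k * psi w i j k)
   + (A * dt / 2) * (GE N (\<lambda>i j k. psi w i j k - pn i j k) (\<lambda>i j k. psi w i j k - pn i j k) / h^2)
   + (eps^2 / 2) * (GE N (psi w) (psi w) / h^2) + (ca / 2) * (GE N w w / h^2)"
definition "Dm w = (w 1 1 1 = 0 \<and> (\<forall>i j k. (i,j,k) \<in> GG N \<longrightarrow> \<bar>psi w i j k\<bar> \<le> 1))"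

lemma per_g: "per N g" and per_q: "per N q"
  unfolding per_def g_def q_def using perD[OF ppn] perD[OF ppm] by simp_all

lemma per_psi: "per N w \<Longrightarrow> per N (psi w)"
  unfolding per_def[of N "psi w"] unfolding psi_def using perD[OF per_g] perD[OF per_lap, of N w h] by simp

lemma per_mu: "per N w \<Longrightarrow> per N (mu w)"
proof -
  assume w: "per N w"
  have p1: "per N (lap h (\<lambda>a b c. psi w a b c - pn a b c))"
    by (rule per_lap) (use per_psi[OF w] ppn in \<open>simp add: per_def\<close>)
  have p2: "per N (lap h (psi w))" by (rule per_lap[OF per_psi[OF w]])
  show ?thesis
    unfolding per_def[of N "mu w"] unfolding mu_def using perD[OF per_psi[OF w]] perD[OF ppn] perD[OF ppm] perD[OF p1] perD[OF p2]
    by simp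
qed

lemma psi_lin: "psi (\<lambda>i j k. w i j k + t * v i j k) = (\<lambda>i j k. psi w i j k + t * (ca * lap h v i j k))"
  unfolding psi_def ca_def by (simp add: lap_lin algebra_simps)

lemma S_psi: assumes "per N w" shows "S N (psi w) = S N pn"
proof -
  have "S N (psi w) = (2/3) * (S N g + dt * S N (lap h w))"
    unfolding psi_def S_cmult[symmetric] S_add[symmetric] ..
  also have "S N g = 2 * S N pn - (1/2) * S N pm" unfolding g_def S_cmult[symmetric] S_diff[symmetric] ..
  finally show ?thesis using S_lap0[OF assms] Seq by simp
qed

lemma interior_pt:
  obtains w1 where "per N w1" "Dm w1" "\<And>i j k. \<bar>psi w1 i j k\<bar> < 1"
proof -
  define m where "m = S N pn / real N ^ 3"
  define f where "f = (\<lambda>i j k. (1/dt) * ((3/2) * m - g i j k))"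
  have pf: "per N f" unfolding per_def f_def using perD[OF per_g] by simp
  have "S N f = (1/dt) * ((3/2) * m * real N ^ 3 - S N g)"
    unfolding f_def S_cmult S_diff S_const by simp
  also have "S N g = 2 * S N pn - (1/2) * S N pm" unfolding g_def S_cmult[symmetric] S_diff[symmetric] ..
  finally have sf: "S N f = 0" using Seq N unfolding m_def by simp
  obtain u where u: "per N u" "u 1 1 1 = 0" "lap h u = f" using poisson[OF N _ pf sf, of h] h by auto
  have pu: "psi u = (\<lambda>i j k. m)" unfolding psi_def u(3) f_def using dt by (auto simp: fun_eq_iff field_simps)
  have "\<bar>m\<bar> < 1" using mean unfolding m_def .
  then show ?thesis using u by (intro that[of u]) (auto simp: Dm_def pu)
qed


lemma cg_psi: "cg B U \<Longrightarrow> cg B (\<lambda>x. psi (U x))"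
  unfolding psi_def by (intro cg_cmult cg_add cg_const cg_lap)

lemma cont_J: "continuous_on B (\<lambda>x. J (ext N x))"
  unfolding J_def
  by (intro continuous_intros cont_S cont_GE cg_Fc cg_psi cg_ext cg_mult cg_const cg_diff) (use h in simp)+

lemma closed_Dm: "closed {x. Dm (ext N x)}"
proof -
  have e: "{x. Dm (ext N x)} = {x. ext N x 1 1 1 = 0} \<inter> (\<Inter>(i,j,k)\<in>GG N. {x. \<bar>psi (ext N x) i j k\<bar> \<le> 1})"
    unfolding Dm_def by auto
  have c1: "closed {x. ext N x 1 1 1 = 0}" by (intro closed_Collect_eq continuous_intros)
  have c2: "closed {x. \<bar>psi (ext N x) i j k\<bar> \<le> 1}" for i j k
    by (intro closed_Collect_le continuous_intros cgD[OF cg_psi[OF cg_ext]])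
  have c3: "\<forall>p\<in>GG N. closed ((\<lambda>(i,j,k). {x. \<bar>psi (ext N x) i j k\<bar> \<le> 1}) p)"
    using c2 by auto
  show ?thesis unfolding e by (intro closed_Int c1 closed_INT c3)
qed

lemma J_lower:
  assumes w: "per N w" "Dm w"
  shows "J w \<ge> - th0 * S N (\<lambda>i j k. \<bar>q i j k\<bar>) + (ca / 2) * (GE N w w / h^2)"
proof -
  have b: "\<And>i j k. i \<in> {1..int N} \<Longrightarrow> j \<in> {1..int N} \<Longrightarrow> k \<in> {1..int N} \<Longrightarrow> \<bar>psi w i j k\<bar> \<le> 1"
    using w(2) unfolding Dm_def GG_def by auto
  have 1: "S N (\<lambda>i j k. Fc (psi w i j k)) \<ge> 0" by (rule S_nonneg) (use b Fc_nonneg in auto)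
  have 2: "S N (\<lambda>i j k. q i j k * psi w i j k) \<le> S N (\<lambda>i j k. \<bar>q i j k\<bar>)"
  proof (rule S_mono)
    fix i j k assume "i \<in> {1..int N}" "j \<in> {1..int N}" "k \<in> {1..int N}"
    then have "\<bar>psi w i j k\<bar> \<le> 1" by (rule b)
    then have "\<bar>q i j k\<bar> * \<bar>psi w i j k\<bar> \<le> \<bar>q i j k\<bar> * 1" by (intro mult_left_mono) auto
    then show "q i j k * psi w i j k \<le> \<bar>q i j k\<bar>" by (simp add: abs_mult[symmetric])
  qed
  have 3: "(A * dt / 2) * (GE N (\<lambda>i j k. psi w i j k - pn i j k) (\<lambda>i j k. psi w i j k - pn i j k) / h^2) \<ge> 0"
    using A dt GE_nonneg h by (intro mult_nonneg_nonneg divide_nonneg_pos) auto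
  have 4: "(eps^2 / 2) * (GE N (psi w) (psi w) / h^2) \<ge> 0"
    using GE_nonneg h by (intro mult_nonneg_nonneg divide_nonneg_pos) auto
  have "th0 * S N (\<lambda>i j k. q i j k * psi w i j k) \<le> th0 * S N (\<lambda>i j k. \<bar>q i j k\<bar>)"
    using 2 th0 by (intro mult_left_mono) auto
  then show ?thesis using 1 3 4 unfolding J_def by linarith
qed

lemma exists_min:
  obtains wm where "per N wm" "Dm wm" "\<And>w. per N w \<Longrightarrow> Dm w \<Longrightarrow> J wm \<le> J w"
proof -
  obtain w1 where w1: "per N w1" "Dm w1" "\<And>i j k. \<bar>psi w1 i j k\<bar> < 1" by (rule interior_pt) blast
  define Q where "Q = S N (\<lambda>i j k. \<bar>q i j k\<bar>)"
  define C where "C = (J w1 + th0 * Q) * 2 * h^2 / ca"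
  define R where "R = 3 * real N * sqrt C"
  have ca: "ca > 0" unfolding ca_def using dt by simp
  have "\<exists>wm. per N wm \<and> Dm wm \<and> (\<forall>w. per N w \<longrightarrow> Dm w \<longrightarrow> J wm \<le> J w)"
  proof (rule min_exists[OF N closed_Dm cont_J w1(1,2), where R = R])
    fix w i j k assume w: "per N w" "Dm w" "J w \<le> J w1" and p: "(i, j, k) \<in> GG N"
    have "- th0 * Q + (ca / 2) * (GE N w w / h^2) \<le> J w1" using J_lower[OF w(1,2)] w(3) unfolding Q_def by linarith
    then have "GE N w w \<le> C" unfolding C_def using ca h by (simp add: field_simps)
    then have "sqrt (GE N w w) \<le> sqrt C" by simp
    then have "3 * real N * sqrt (GE N w w) \<le> R" unfolding R_def by (intro mult_left_mono) auto
    moreover have "\<bar>w i j k\<bar> \<le> 3 * real N * sqrt (GE N w w)"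
      using poincare[OF w(1) N] w(2) p unfolding Dm_def GG_def by auto
    ultimately show "\<bar>w i j k\<bar> \<le> R" by linarith
  qed
  then show ?thesis using that by blast
qed


lemma psi_seg: "psi (\<lambda>i j k. w i j k + t * (w1 i j k - w i j k)) = (\<lambda>i j k. psi w i j k + t * (psi w1 i j k - psi w i j k))"
  unfolding psi_lin by (simp add: psi_def ca_def lap_diff fun_eq_iff algebra_simps)

lemma GE_line: "GE N (\<lambda>i j k. u i j k + t * (u1 i j k - u i j k)) (\<lambda>i j k. u i j k + t * (u1 i j k - u i j k))
  = GE N u u + 2 * t * GE N u (\<lambda>i j k. u1 i j k - u i j k) + t^2 * GE N (\<lambda>i j k. u1 i j k - u i j k) (\<lambda>i j k. u1 i j k - u i j k)"
  by (rule GE_bilin)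

lemma J_seg:
  fixes w w1 :: gridfun
  shows "\<exists>C0. \<forall>t. 0 \<le> t \<longrightarrow> t \<le> 1 \<longrightarrow> J (\<lambda>i j k. w i j k + t * (w1 i j k - w i j k)) - J w
     \<le> (S N (\<lambda>i j k. Fc (psi (\<lambda>i j k. w i j k + t * (w1 i j k - w i j k)) i j k)) - S N (\<lambda>i j k. Fc (psi w i j k))) + t * C0"
proof -
  let ?P = "psi w" and ?P1 = "psi w1"
  define d1 where "d1 = (\<lambda>i j k. (?P1 i j k - pn i j k) - (?P i j k - pn i j k))"
  define d2 where "d2 = (\<lambda>i j k. ?P1 i j k - ?P i j k)"
  define d3 where "d3 = (\<lambda>i j k. w1 i j k - w i j k)"
  define K where "K = (A * dt / 2) * (GE N d1 d1 / h^2) + (eps^2 / 2) * (GE N d2 d2 / h^2) + (ca / 2) * (GE N d3 d3 / h^2)"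
  have K0: "K \<ge> 0" unfolding K_def using A dt h GE_nonneg unfolding ca_def
    by (intro add_nonneg_nonneg mult_nonneg_nonneg divide_nonneg_pos) auto
  define L where "L = - th0 * S N (\<lambda>i j k. q i j k * (?P1 i j k - ?P i j k))
     + (A * dt / 2) * (2 * GE N (\<lambda>i j k. ?P i j k - pn i j k) d1 / h^2)
     + (eps^2 / 2) * (2 * GE N ?P d2 / h^2) + (ca / 2) * (2 * GE N w d3 / h^2)"
  show ?thesis
  proof (intro exI[of _ "L + K"] allI impI)
  fix t :: real assume t: "0 \<le> t" "t \<le> 1"
  define wt where "wt = (\<lambda>i j k. w i j k + t * (w1 i j k - w i j k))"
  have pw: "psi wt = (\<lambda>i j k. ?P i j k + t * (?P1 i j k - ?P i j k))" unfolding wt_def psi_seg ..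
  have e1: "(\<lambda>i j k. psi wt i j k - pn i j k) = (\<lambda>i j k. (?P i j k - pn i j k) + t * ((?P1 i j k - pn i j k) - (?P i j k - pn i j k)))"
    unfolding pw by (simp add: fun_eq_iff algebra_simps)
  have e2: "S N (\<lambda>i j k. q i j k * psi wt i j k) = S N (\<lambda>i j k. q i j k * ?P i j k) + t * S N (\<lambda>i j k. q i j k * (?P1 i j k - ?P i j k))"
    unfolding pw S_add[symmetric] S_cmult[symmetric] by (rule S_cong) (simp add: algebra_simps)
  have "J wt - J w = (S N (\<lambda>i j k. Fc (psi wt i j k)) - S N (\<lambda>i j k. Fc (psi w i j k))) + t * L + t^2 * K"
    unfolding J_def e1 e2 unfolding pw unfolding wt_def GE_line d1_def[symmetric] d2_def[symmetric] d3_def[symmetric] K_def L_def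
    using h by (simp add: field_simps)
  moreover have "t^2 * K \<le> t * K" using t K0 by (simp add: power2_eq_square mult_right_le_one_le mult_left_le_one_le mult_right_mono)
  ultimately have "J wt - J w \<le> (S N (\<lambda>i j k. Fc (psi wt i j k)) - S N (\<lambda>i j k. Fc (psi w i j k))) + t * (L + K)"
    by (simp add: distrib_left)
  then show "J (\<lambda>i j k. w i j k + t * (w1 i j k - w i j k)) - J w
     \<le> (S N (\<lambda>i j k. Fc (psi (\<lambda>i j k. w i j k + t * (w1 i j k - w i j k)) i j k)) - S N (\<lambda>i j k. Fc (psi w i j k))) + t * (L + K)"
    unfolding wt_def .
  qed
qed


lemma Dm_seg:
  assumes "per N w" "Dm w" "per N w1" "Dm w1" "0 \<le> t" "t \<le> 1"
  shows "per N (\<lambda>i j k. w i j k + t * (w1 i j k - w i j k))" "Dm (\<lambda>i j k. w i j k + t * (w1 i j k - w i j k))"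
proof -
  show "per N (\<lambda>i j k. w i j k + t * (w1 i j k - w i j k))"
    using assms(1,3) unfolding per_def by simp
  show "Dm (\<lambda>i j k. w i j k + t * (w1 i j k - w i j k))"
    unfolding Dm_def psi_seg
  proof (intro conjI allI impI)
    show "w 1 1 1 + t * (w1 1 1 1 - w 1 1 1) = 0" using assms(2,4) unfolding Dm_def by simp
    fix i j k assume p: "(i,j,k) \<in> GG N"
    have x: "\<bar>psi w i j k\<bar> \<le> 1" "\<bar>psi w1 i j k\<bar> \<le> 1" using assms(2,4) p unfolding Dm_def by auto
    have "psi w i j k + t * (psi w1 i j k - psi w i j k) = (1 - t) * psi w i j k + t * psi w1 i j k"
      by (simp add: algebra_simps)
    moreover have "\<bar>(1 - t) * psi w i j k + t * psi w1 i j k\<bar> \<le> (1 - t) * 1 + t * 1"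
    proof -
      have "\<bar>(1 - t) * psi w i j k + t * psi w1 i j k\<bar> \<le> (1 - t) * \<bar>psi w i j k\<bar> + t * \<bar>psi w1 i j k\<bar>"
        using assms(5,6) abs_triangle_ineq[of "(1 - t) * psi w i j k" "t * psi w1 i j k"] by (simp add: abs_mult)
      also have "\<dots> \<le> (1 - t) * 1 + t * 1" using x assms(5,6) by (intro add_mono mult_left_mono) auto
      finally show ?thesis .
    qed
    ultimately show "\<bar>psi w i j k + t * (psi w1 i j k - psi w i j k)\<bar> \<le> 1" by simp
  qed
qed

lemma min_interior:
  assumes wm: "per N wm" "Dm wm" "\<And>w. per N w \<Longrightarrow> Dm w \<Longrightarrow> J wm \<le> J w"
    and p0: "(a0,b0,c0) \<in> GG N"
  shows "\<bar>psi wm a0 b0 c0\<bar> < 1"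
proof (rule ccontr)
  assume ne: "\<not> \<bar>psi wm a0 b0 c0\<bar> < 1"
  let ?P = "psi wm"
  have P1: "\<bar>?P a0 b0 c0\<bar> = 1" using ne wm(2) p0 unfolding Dm_def by force
  obtain w1 where w1: "per N w1" "Dm w1" "\<And>i j k. \<bar>psi w1 i j k\<bar> < 1" by (rule interior_pt) blast
  let ?Q = "psi w1"
  have abc: "a0 \<in> {1..int N}" "b0 \<in> {1..int N}" "c0 \<in> {1..int N}" using p0 unfolding GG_def by auto
  define b where "b = (if ?P a0 b0 c0 = -1 then ?Q a0 b0 c0 + 1 else 1 - ?Q a0 b0 c0)"
  have b: "0 < b" "b \<le> 2" using w1(3)[of a0 b0 c0] P1 unfolding b_def by (auto simp: abs_if split: if_splits)
  obtain C0 where C0: "\<And>t. 0 \<le> t \<Longrightarrow> t \<le> 1 \<Longrightarrow> J (\<lambda>i j k. wm i j k + t * (w1 i j k - wm i j k)) - J wm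
     \<le> (S N (\<lambda>i j k. Fc (psi (\<lambda>i j k. wm i j k + t * (w1 i j k - wm i j k)) i j k)) - S N (\<lambda>i j k. Fc (?P i j k))) + t * C0"
    using J_seg[of wm w1] by blast
  define C1 where "C1 = C0 + S N (\<lambda>i j k. Fc (?Q i j k) - Fc (?P i j k)) - (Fc (?Q a0 b0 c0) - Fc (?P a0 b0 c0))"
  have main: "J (\<lambda>i j k. wm i j k + t * (w1 i j k - wm i j k)) - J wm \<le> t * C1 + el (t * b)" if t: "0 \<le> t" "t \<le> 1" for t
  proof -
    let ?Pt = "\<lambda>i j k. ?P i j k + t * (?Q i j k - ?P i j k)"
    define Bf where "Bf = (\<lambda>i j k. t * (Fc (?Q i j k) - Fc (?P i j k)) + (el (t * b) - t * (Fc (?Q a0 b0 c0) - Fc (?P a0 b0 c0))) * dl N a0 b0 c0 i j k)"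
    have "S N (\<lambda>i j k. Fc (?Pt i j k) - Fc (?P i j k)) \<le> S N Bf"
    proof (rule S_mono)
      fix i j k assume ijk: "i \<in> {1..int N}" "j \<in> {1..int N}" "k \<in> {1..int N}"
      have xP: "\<bar>?P i j k\<bar> \<le> 1" using wm(2) ijk unfolding Dm_def GG_def by auto
      have xQ: "\<bar>?Q i j k\<bar> \<le> 1" using w1(3)[of i j k] by simp
      show "Fc (?Pt i j k) - Fc (?P i j k) \<le> Bf i j k"
      proof (cases "(i,j,k) = (a0,b0,c0)")
        case True
        then have d1: "dl N a0 b0 c0 i j k = 1" using abc by (auto simp: dl_def cm_id)
        have "Fc (?Pt a0 b0 c0) - Fc (?P a0 b0 c0) \<le> el (t * b)"
        proof (cases "?P a0 b0 c0 = -1")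
          case True
          have e: "?Pt a0 b0 c0 = -1 + t * b" unfolding b_def using True by simp
          have "0 \<le> t * b" "t * b \<le> 2" using t b mult_mono[of t 1 b 2] by auto
          then have "Fc (-1 + t * b) - Fc (-1) \<le> el (t * b)" by (rule Fc_bdry_lo)
          then show ?thesis unfolding e by (simp only: True)
        next
          case False
          then have P1': "?P a0 b0 c0 = 1" using P1 by (auto simp: abs_if split: if_splits)
          have e: "?Pt a0 b0 c0 = 1 - t * b" unfolding b_def using P1' by (simp add: algebra_simps)
          have "0 \<le> t * b" "t * b \<le> 2" using t b mult_mono[of t 1 b 2] by auto
          then have "Fc (1 - t * b) - Fc 1 \<le> el (t * b)" by (rule Fc_bdry_hi)
          then show ?thesis unfolding e by (simp only: P1')
        qed
        then show ?thesis unfolding Bf_def using True d1 by simp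
      next
        case False
        then have d0: "dl N a0 b0 c0 i j k = 0" using ijk by (auto simp: dl_def cm_id)
        have "Fc ((1 - t) * ?P i j k + t * ?Q i j k) \<le> (1 - t) * Fc (?P i j k) + t * Fc (?Q i j k)"
          by (rule Fc_conv[OF xP xQ t])
        moreover have "(1 - t) * ?P i j k + t * ?Q i j k = ?Pt i j k" by (simp add: algebra_simps)
        ultimately show ?thesis unfolding Bf_def using d0 by (simp add: algebra_simps)
      qed
    qed
    also have "S N Bf = t * S N (\<lambda>i j k. Fc (?Q i j k) - Fc (?P i j k)) + (el (t * b) - t * (Fc (?Q a0 b0 c0) - Fc (?P a0 b0 c0)))"
      unfolding Bf_def S_add S_cmult using S_dl[OF abc, of "\<lambda>_ _ _. 1"] by simp
    finally have "S N (\<lambda>i j k. Fc (?Pt i j k)) - S N (\<lambda>i j k. Fc (?P i j k)) \<le> t * S N (\<lambda>i j k. Fc (?Q i j k) - Fc (?P i j k)) + (el (t * b) - t * (Fc (?Q a0 b0 c0) - Fc (?P a0 b0 c0)))"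
      unfolding S_diff .
    moreover have "psi (\<lambda>i j k. wm i j k + t * (w1 i j k - wm i j k)) = ?Pt" by (rule psi_seg)
    ultimately show ?thesis using C0[OF t] unfolding C1_def by (simp add: algebra_simps)
  qed
  define E where "E = exp (- (\<bar>C1\<bar> + 1) / b)"
  define t where "t = min 1 (E / b)"
  have E: "E > 0" unfolding E_def by simp
  have t: "0 < t" "t \<le> 1" unfolding t_def using E b by auto
  have tb: "t * b \<le> E" "0 < t * b"
  proof -
    show "0 < t * b" using t b by simp
    have "t \<le> E / b" unfolding t_def by simp
    then have "t * b \<le> E / b * b" using b by (intro mult_right_mono) auto
    then show "t * b \<le> E" using b by simp
  qed
  have "ln (t * b) \<le> ln E" using tb by simp
  then have "ln (t * b) \<le> - (\<bar>C1\<bar> + 1) / b" unfolding E_def by simp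
  then have "b * ln (t * b) \<le> - (\<bar>C1\<bar> + 1)" using b by (simp add: field_simps)
  then have "t * (b * ln (t * b)) \<le> t * (- (\<bar>C1\<bar> + 1))" using t by (intro mult_left_mono) auto
  then have x1: "t * (b * ln (t * b)) \<le> - (t * \<bar>C1\<bar>) - t" by (simp add: algebra_simps)
  have x2: "el (t * b) = t * (b * ln (t * b))" unfolding el_def by (simp add: mult.assoc)
  have x3: "t * C1 \<le> t * \<bar>C1\<bar>" using t by (intro mult_left_mono) auto
  have "t * C1 + el (t * b) < 0" using x1 x2 x3 t by linarith
  moreover have "J wm \<le> J (\<lambda>i j k. wm i j k + t * (w1 i j k - wm i j k))"
    using Dm_seg[OF wm(1,2) w1(1,2), of t] t by (intro wm(3)) auto
  ultimately show False using main[of t] t by linarith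
qed


lemma lap_bound:
  assumes "\<And>i j k. \<bar>v i j k\<bar> \<le> 1"
  shows "\<bar>lap h v i j k\<bar> \<le> 12 / h^2"
proof -
  define X where "X = (v (i + 1) j k - 2 * v i j k + v (i - 1) j k) + (v i (j + 1) k - 2 * v i j k + v i (j - 1) k)
     + (v i j (k + 1) - 2 * v i j k + v i j (k - 1))"
  have "lap h v i j k = X / h^2" unfolding lap_def X_def using h by (simp add: field_simps)
  moreover have "\<bar>X\<bar> \<le> 12" unfolding X_def
    using assms[of "i+1" j k] assms[of i j k] assms[of "i - 1" j k] assms[of i "j+1" k] assms[of i "j - 1" k]
      assms[of i j "k+1"] assms[of i j "k - 1"] by (simp add: abs_le_iff)
  ultimately show ?thesis using h by (simp add: abs_divide divide_right_mono)
qed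

lemma Fc_line_deriv: "\<bar>x\<bar> < 1 \<Longrightarrow> ((\<lambda>t. Fc (x + t * c)) has_real_derivative Fp x * c) (at 0)"
proof -
  assume x: "\<bar>x\<bar> < 1"
  have g: "((\<lambda>t. x + t * c) has_real_derivative c) (at 0)" by (auto intro!: derivative_eq_intros)
  have "(Fc has_real_derivative Fp x) (at ((\<lambda>t. x + t * c) 0))" using Fc_deriv[OF x] by simp
  from DERIV_chain2[OF this g] show ?thesis .
qed

lemma EL_point:
  assumes wm: "per N wm" "Dm wm" "\<And>w. per N w \<Longrightarrow> Dm w \<Longrightarrow> J wm \<le> J w"
    and int: "\<And>i j k. (i,j,k) \<in> GG N \<Longrightarrow> \<bar>psi wm i j k\<bar> < 1"
    and p0: "(a0,b0,c0) \<in> GG N" "(a0,b0,c0) \<noteq> (1,1,1)"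
  shows "lap h (mu wm) a0 b0 c0 = lap h wm a0 b0 c0"
proof -
  let ?P = "psi wm"
  let ?d = "dl N a0 b0 c0"
  define e where "e = (\<lambda>i j k. ca * lap h ?d i j k)"
  have abc: "a0 \<in> {1..int N}" "b0 \<in> {1..int N}" "c0 \<in> {1..int N}" using p0 unfolding GG_def by auto
  have d0: "?d 1 1 1 = 0" using p0 abc by (auto simp: dl_def cm_id)
  have pP: "per N ?P" by (rule per_psi[OF wm(1)])
  have pd: "per N ?d" by (rule per_dl)
  have pe: "per N e" unfolding e_def using perD[OF per_lap[OF pd, of h]] unfolding per_def by simp
  have pPn: "per N (\<lambda>i j k. ?P i j k - pn i j k)" using perD[OF pP] perD[OF ppn] unfolding per_def by simp
  define k0 where "k0 = - th0 * S N (\<lambda>i j k. q i j k * ?P i j k)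
     + (A * dt / 2) * (GE N (\<lambda>i j k. ?P i j k - pn i j k) (\<lambda>i j k. ?P i j k - pn i j k) / h^2)
     + (eps^2 / 2) * (GE N ?P ?P / h^2) + (ca / 2) * (GE N wm wm / h^2)"
  define k1 where "k1 = - th0 * S N (\<lambda>i j k. q i j k * e i j k)
     + (A * dt) * (GE N (\<lambda>i j k. ?P i j k - pn i j k) e / h^2)
     + eps^2 * (GE N ?P e / h^2) + ca * (GE N wm ?d / h^2)"
  define k2 where "k2 = (A * dt / 2) * (GE N e e / h^2) + (eps^2 / 2) * (GE N e e / h^2) + (ca / 2) * (GE N ?d ?d / h^2)"
  have Jexp: "J (\<lambda>i j k. wm i j k + t * ?d i j k) = S N (\<lambda>i j k. Fc (?P i j k + t * e i j k)) + k0 + t * k1 + t^2 * k2" for t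
  proof -
    have pl: "psi (\<lambda>i j k. wm i j k + t * ?d i j k) = (\<lambda>i j k. ?P i j k + t * e i j k)" unfolding psi_lin e_def ..
    have e1: "(\<lambda>i j k. ?P i j k + t * e i j k - pn i j k) = (\<lambda>i j k. (?P i j k - pn i j k) + t * e i j k)"
      by (simp add: fun_eq_iff algebra_simps)
    have e2: "S N (\<lambda>i j k. q i j k * (?P i j k + t * e i j k)) = S N (\<lambda>i j k. q i j k * ?P i j k) + t * S N (\<lambda>i j k. q i j k * e i j k)"
      unfolding S_add[symmetric] S_cmult[symmetric] by (rule S_cong) (simp add: algebra_simps)
    show ?thesis unfolding J_def pl unfolding e1 e2 GE_bilin k0_def k1_def k2_def
      using h by (simp add: field_simps)
  qed
  define Dv where "Dv = S N (\<lambda>i j k. Fp (?P i j k) * e i j k) + k1"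
  have der: "((\<lambda>t. J (\<lambda>i j k. wm i j k + t * ?d i j k)) has_real_derivative Dv) (at 0)"
  proof -
    have "((\<lambda>t. S N (\<lambda>i j k. Fc (?P i j k + t * e i j k))) has_real_derivative S N (\<lambda>i j k. Fp (?P i j k) * e i j k)) (at 0)"
      by (rule DERIV_S) (use int in \<open>auto intro!: Fc_line_deriv simp: GG_def\<close>)
    then have "((\<lambda>t. S N (\<lambda>i j k. Fc (?P i j k + t * e i j k)) + k0 + t * k1 + t^2 * k2) has_real_derivative Dv) (at 0)"
      unfolding Dv_def by (auto intro!: derivative_eq_intros)
    then show ?thesis unfolding Jexp .
  qed
  define eta where "eta = Min ((\<lambda>(i,j,k). 1 - \<bar>?P i j k\<bar>) ` GG N)"
  have finG: "finite (GG N)" "GG N \<noteq> {}" unfolding GG_def using abc by auto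
  have eta: "eta > 0" unfolding eta_def using finG int by (subst Min_gr_iff) auto
  have eta_le: "eta \<le> 1 - \<bar>?P i j k\<bar>" if "(i,j,k) \<in> GG N" for i j k
    unfolding eta_def using finG that by (intro Min_le) force+
  define Ke where "Ke = ca * (12 / h^2)"
  have ca: "ca > 0" unfolding ca_def using dt by simp
  have eb: "\<bar>e i j k\<bar> \<le> Ke" for i j k
  proof -
    have "\<bar>lap h ?d i j k\<bar> \<le> 12 / h^2" by (rule lap_bound) (rule dl_bound)
    then have "ca * \<bar>lap h ?d i j k\<bar> \<le> ca * (12 / h^2)" using ca by (intro mult_left_mono) auto
    then show ?thesis unfolding e_def Ke_def using ca by (simp add: abs_mult)
  qed
  have Ke0: "Ke \<ge> 0" unfolding Ke_def using ca by simp
  define dd where "dd = eta / (Ke + 1)"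
  have dd: "dd > 0" unfolding dd_def using eta Ke0 by simp
  have "Dv = 0"
  proof (rule DERIV_local_min[OF der dd], intro allI impI)
    fix y :: real assume y: "\<bar>0 - y\<bar> < dd"
    show "J (\<lambda>i j k. wm i j k + 0 * ?d i j k) \<le> J (\<lambda>i j k. wm i j k + y * ?d i j k)"
    proof -
      have pw: "per N (\<lambda>i j k. wm i j k + y * ?d i j k)" using perD[OF wm(1)] perD[OF pd] unfolding per_def by simp
      have "Dm (\<lambda>i j k. wm i j k + y * ?d i j k)"
        unfolding Dm_def psi_lin
      proof (intro conjI allI impI)
        show "wm 1 1 1 + y * ?d 1 1 1 = 0" using wm(2) d0 unfolding Dm_def by simp
        fix i j k assume p: "(i,j,k) \<in> GG N"
        have "\<bar>y * (ca * lap h ?d i j k)\<bar> \<le> \<bar>y\<bar> * Ke" using eb[of i j k] unfolding e_def abs_mult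
          by (intro mult_left_mono) auto
        also have "\<dots> \<le> dd * Ke" using y Ke0 by (intro mult_right_mono) auto
        also have "\<dots> \<le> eta" unfolding dd_def using eta Ke0 by (simp add: field_simps)
        finally have "\<bar>y * (ca * lap h ?d i j k)\<bar> \<le> eta" .
        then show "\<bar>?P i j k + y * (ca * lap h ?d i j k)\<bar> \<le> 1" using eta_le[OF p] by linarith
      qed
      then show ?thesis using wm(3)[OF pw] by simp
    qed
  qed
  have g1: "GE N (\<lambda>i j k. ?P i j k - pn i j k) e / h^2 = - S N (\<lambda>i j k. lap h (\<lambda>i j k. ?P i j k - pn i j k) i j k * e i j k)"
    using sbp[OF pPn pe, where h=h] h by simp
  have g2: "GE N ?P e / h^2 = - S N (\<lambda>i j k. lap h ?P i j k * e i j k)"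
    using sbp[OF pP pe, where h=h] h by simp
  have g3: "GE N wm ?d / h^2 = - lap h wm a0 b0 c0"
    using sbp[OF wm(1) pd, where h=h] h S_dl[OF abc, of "lap h wm"] by simp
  have "S N (\<lambda>i j k. mu wm i j k * e i j k) = S N (\<lambda>i j k. Fp (?P i j k) * e i j k) - th0 * S N (\<lambda>i j k. q i j k * e i j k)
     - (A * dt) * S N (\<lambda>i j k. lap h (\<lambda>i j k. ?P i j k - pn i j k) i j k * e i j k) - eps^2 * S N (\<lambda>i j k. lap h ?P i j k * e i j k)"
    unfolding S_cmult[symmetric] S_diff[symmetric] by (rule S_cong) (simp add: mu_def Fp_def q_def algebra_simps)
  also have "S N (\<lambda>i j k. mu wm i j k * e i j k) = ca * S N (\<lambda>i j k. mu wm i j k * lap h ?d i j k)"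
    unfolding e_def S_cmult[symmetric] by (rule S_cong) (simp add: algebra_simps)
  also have "S N (\<lambda>i j k. mu wm i j k * lap h ?d i j k) = S N (\<lambda>i j k. lap h (mu wm) i j k * ?d i j k)"
    using sym_lap[OF per_mu[OF wm(1)] pd, where h=h] by simp
  also have "\<dots> = lap h (mu wm) a0 b0 c0" by (rule S_dl[OF abc])
  finally have "ca * lap h (mu wm) a0 b0 c0 = Dv + ca * lap h wm a0 b0 c0"
    unfolding Dv_def k1_def g1 g2 g3 by (simp add: algebra_simps)
  then have "ca * lap h (mu wm) a0 b0 c0 = ca * lap h wm a0 b0 c0" using \<open>Dv = 0\<close> by simp
  then show ?thesis using ca by simp
qed


lemma existence:
  "\<exists>\<phi>. per N \<phi> \<and>
     (\<exists>\<mu>. per N \<mu> \<and>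
        (\<forall>i j k. ((3/2) * \<phi> i j k - 2 * pn i j k + (1/2) * pm i j k) / dt = lap h \<mu> i j k) \<and>
        (\<forall>i j k. \<mu> i j k = ln (1 + \<phi> i j k) - ln (1 - \<phi> i j k)
                  - th0 * (2 * pn i j k - pm i j k)
                  - A * dt * lap h (\<lambda>a b c. \<phi> a b c - pn a b c) i j k
                  - eps^2 * lap h \<phi> i j k)) \<and>
     S N \<phi> = S N pn \<and> (\<forall>i j k. (i,j,k) \<in> GG N \<longrightarrow> \<bar>\<phi> i j k\<bar> < 1)"
proof -
  obtain wm where wm: "per N wm" "Dm wm" "\<And>w. per N w \<Longrightarrow> Dm w \<Longrightarrow> J wm \<le> J w" by (rule exists_min) blast
  have int: "\<And>i j k. (i,j,k) \<in> GG N \<Longrightarrow> \<bar>psi wm i j k\<bar> < 1" using min_interior[OF wm] by blast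
  have pt: "\<And>a b c. (a,b,c) \<in> GG N \<Longrightarrow> (a,b,c) \<noteq> (1,1,1) \<Longrightarrow> lap h (mu wm) a b c - lap h wm a b c = 0"
    using EL_point[OF wm int] by simp
  have s0: "S N (\<lambda>i j k. lap h (mu wm) i j k - lap h wm i j k) = 0"
    using S_diff[of N "lap h (mu wm)" "lap h wm"] S_lap0[OF per_mu[OF wm(1)]] S_lap0[OF wm(1)] by simp
  have pl: "per N (\<lambda>i j k. lap h (mu wm) i j k - lap h wm i j k)"
    using perD[OF per_lap[OF per_mu[OF wm(1)], of h]] perD[OF per_lap[OF wm(1)], of h] unfolding per_def by simp
  have "(\<lambda>i j k. lap h (mu wm) i j k - lap h wm i j k) = (\<lambda>i j k. 0)"
    by (rule zero_from_sum[OF pl N s0 pt])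
  then have lm: "lap h (mu wm) i j k = lap h wm i j k" for i j k by (auto simp: fun_eq_iff)
  show ?thesis
  proof (intro exI conjI allI impI)
    show "per N (psi wm)" by (rule per_psi[OF wm(1)])
    show "per N (mu wm)" by (rule per_mu[OF wm(1)])
    fix i j k
    show "((3/2) * psi wm i j k - 2 * pn i j k + (1/2) * pm i j k) / dt = lap h (mu wm) i j k"
      unfolding lm psi_def g_def using dt by (simp add: field_simps)
    show "mu wm i j k = ln (1 + psi wm i j k) - ln (1 - psi wm i j k)
                  - th0 * (2 * pn i j k - pm i j k)
                  - A * dt * lap h (\<lambda>a b c. psi wm a b c - pn a b c) i j k
                  - eps^2 * lap h (psi wm) i j k" unfolding mu_def ..
  next
    show "S N (psi wm) = S N pn" by (rule S_psi[OF wm(1)])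
  next
    fix i j k assume "(i,j,k) \<in> GG N" then show "\<bar>psi wm i j k\<bar> < 1" by (rule int)
  qed
qed

end

lemma uniqueness:
  fixes h eps A dt th0 :: real
  assumes N: "N > 0" and h: "h > 0" and dt: "dt > 0" and A: "A \<ge> 0"
    and p1: "per N \<phi>1" "per N \<mu>1" and p2: "per N \<phi>2" "per N \<mu>2"
    and e11: "\<And>i j k. ((3/2) * \<phi>1 i j k - 2 * pn i j k + (1/2) * pm i j k) / dt = lap h \<mu>1 i j k"
    and e12: "\<And>i j k. \<mu>1 i j k = ln (1 + \<phi>1 i j k) - ln (1 - \<phi>1 i j k)
                  - th0 * (2 * pn i j k - pm i j k)
                  - A * dt * lap h (\<lambda>a b c. \<phi>1 a b c - pn a b c) i j k
                  - eps^2 * lap h \<phi>1 i j k"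
    and e21: "\<And>i j k. ((3/2) * \<phi>2 i j k - 2 * pn i j k + (1/2) * pm i j k) / dt = lap h \<mu>2 i j k"
    and e22: "\<And>i j k. \<mu>2 i j k = ln (1 + \<phi>2 i j k) - ln (1 - \<phi>2 i j k)
                  - th0 * (2 * pn i j k - pm i j k)
                  - A * dt * lap h (\<lambda>a b c. \<phi>2 a b c - pn a b c) i j k
                  - eps^2 * lap h \<phi>2 i j k"
    and b1: "\<And>i j k. (i,j,k) \<in> GG N \<Longrightarrow> \<bar>\<phi>1 i j k\<bar> < 1"
    and b2: "\<And>i j k. (i,j,k) \<in> GG N \<Longrightarrow> \<bar>\<phi>2 i j k\<bar> < 1"
  shows "\<phi>1 = \<phi>2"
proof -
  define d where "d = (\<lambda>i j k. \<phi>1 i j k - \<phi>2 i j k)"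
  define m where "m = (\<lambda>i j k. \<mu>1 i j k - \<mu>2 i j k)"
  define F where "F = (\<lambda>i j k. d i j k * (Fp (\<phi>1 i j k) - Fp (\<phi>2 i j k)))"
  have pd: "per N d" unfolding d_def using perD[OF p1(1)] perD[OF p2(1)] unfolding per_def by simp
  have pm': "per N m" unfolding m_def using perD[OF p1(2)] perD[OF p2(2)] unfolding per_def by simp
  have dm: "d i j k = (2 * dt / 3) * lap h m i j k" for i j k
    using e11[of i j k] e21[of i j k] dt unfolding d_def m_def lap_diff by (simp add: field_simps)
  have mm: "m i j k = (Fp (\<phi>1 i j k) - Fp (\<phi>2 i j k)) - (A * dt + eps^2) * lap h d i j k" for i j k
    unfolding m_def e12 e22 d_def lap_diff Fp_def by (simp add: algebra_simps)
  have "S N (\<lambda>i j k. d i j k * m i j k) = (2 * dt / 3) * S N (\<lambda>i j k. lap h m i j k * m i j k)"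
    unfolding S_cmult[symmetric] by (rule S_cong) (simp add: dm)
  also have "\<dots> = (2 * dt / 3) * (- GE N m m / h^2)" using sbp[OF pm' pm', where h=h] by simp
  also have "\<dots> \<le> 0" using dt h GE_nonneg[of N m] by (simp add: mult_nonneg_nonneg divide_nonneg_pos)
  finally have le0: "S N (\<lambda>i j k. d i j k * m i j k) \<le> 0" .
  have "S N (\<lambda>i j k. d i j k * m i j k) = S N F - (A * dt + eps^2) * S N (\<lambda>i j k. lap h d i j k * d i j k)"
    unfolding S_cmult[symmetric] S_diff[symmetric] F_def by (rule S_cong) (simp add: mm algebra_simps)
  also have "S N (\<lambda>i j k. lap h d i j k * d i j k) = - GE N d d / h^2" by (rule sbp[OF pd pd])
  finally have "S N F = S N (\<lambda>i j k. d i j k * m i j k) - (A * dt + eps^2) * (GE N d d / h^2)" by simp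
  moreover have "(A * dt + eps^2) * (GE N d d / h^2) \<ge> 0" using A dt h GE_nonneg[of N d]
    by (intro mult_nonneg_nonneg divide_nonneg_pos add_nonneg_nonneg) auto
  ultimately have SF: "S N F \<le> 0" using le0 by linarith
  have Fnn: "\<And>i j k. i \<in> {1..int N} \<Longrightarrow> j \<in> {1..int N} \<Longrightarrow> k \<in> {1..int N} \<Longrightarrow> 0 \<le> F i j k"
    unfolding F_def d_def using b1 b2 Fp_mono2(1) unfolding GG_def by auto
  show ?thesis
  proof (rule per_eqI[OF p1(1) p2(1) _ N])
    fix i j k assume ijk: "i \<in> {1..int N}" "j \<in> {1..int N}" "k \<in> {1..int N}"
    have "F i j k \<le> S N F" by (rule S_single[OF Fnn ijk])
    then have "F i j k = 0" using SF Fnn[OF ijk] by linarith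
    then show "\<phi>1 i j k = \<phi>2 i j k"
      using Fp_mono2(2)[OF b1 b2] ijk unfolding F_def d_def GG_def by auto
  qed
qed


lemma gmean_S: assumes "L > 0" "N > 0" shows "gmean L N \<nu> = S N \<nu> / real N ^ 3"
proof -
  have "ginner (L / real N) N \<nu> (\<lambda>_ _ _. 1) = (L / real N) ^ 3 * S N \<nu>"
    unfolding ginner_def S_def by simp
  then show ?thesis unfolding gmean_def using assms by (simp add: field_simps)
qed

lemma gsup_lt: assumes "N > 0" shows "gsupnorm N \<phi> < 1 \<longleftrightarrow> (\<forall>i j k. (i,j,k) \<in> GG N \<longrightarrow> \<bar>\<phi> i j k\<bar> < 1)"
proof -
  have e: "{\<bar>\<phi> i j k\<bar> | i j k. i \<in> {1..int N} \<and> j \<in> {1..int N} \<and> k \<in> {1..int N}} = (\<lambda>(i,j,k). \<bar>\<phi> i j k\<bar>) ` GG N"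
    unfolding GG_def by (rule set_eqI) (auto simp: image_iff simp del: atLeastAtMost_iff)
  have fin: "finite (GG N)" "GG N \<noteq> {}" unfolding GG_def using assms by auto
  show ?thesis unfolding gsupnorm_def e using fin by (subst Max_less_iff) auto
qed

theorem theorem6p1:
  fixes L \<epsilon> \<theta>0 dt A M :: real and N :: nat and \<phi>n \<phi>nm1 :: gridfun
  assumes "L > 0" and "N > 0" and "\<epsilon> > 0" and "\<theta>0 > 0" and "dt > 0" and "A \<ge> 0"
    and "M > 0"
    and "per N \<phi>n" and "per N \<phi>nm1"
    and "gsupnorm N \<phi>n \<le> M" and "gsupnorm N \<phi>nm1 \<le> M"
    and "\<bar>gmean L N \<phi>n\<bar> = \<bar>gmean L N \<phi>nm1\<bar>" and "\<bar>gmean L N \<phi>n\<bar> < 1"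
    and "gmean L N \<phi>n = gmean L N \<phi>nm1"
  shows "\<exists>!\<phi>. per N \<phi> \<and>
           (\<exists>\<mu>. per N \<mu> \<and>
              (\<forall>i j k. ((3/2) * \<phi> i j k - 2 * \<phi>n i j k + (1/2) * \<phi>nm1 i j k) / dt
                         = lap (L / real N) \<mu> i j k) \<and>
              (\<forall>i j k. \<mu> i j k = ln (1 + \<phi> i j k) - ln (1 - \<phi> i j k)
                         - \<theta>0 * (2 * \<phi>n i j k - \<phi>nm1 i j k)
                         - A * dt * lap (L / real N) (\<lambda>a b c. \<phi> a b c - \<phi>n a b c) i j k
                         - \<epsilon>^2 * lap (L / real N) \<phi> i j k)) \<and>
           gmean L N (\<lambda>i j k. \<phi> i j k - gmean L N \<phi>n) = 0 \<and>
           gsupnorm N \<phi> < 1"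
proof -
  note as = assms
  have hpos: "L / real N > 0" using as by simp
  have Seq: "S N \<phi>n = S N \<phi>nm1" using as(14) gmean_S[OF as(1,2)] as by simp
  have mean: "\<bar>S N \<phi>n / real N ^ 3\<bar> < 1" using as(13) gmean_S[OF as(1,2)] by simp
  interpret sch N "L / real N" \<epsilon> \<theta>0 dt A \<phi>n \<phi>nm1
    by unfold_locales (use as hpos Seq mean in auto)
  have gm0: "gmean L N (\<lambda>i j k. \<phi> i j k - gmean L N \<phi>n) = 0 \<longleftrightarrow> S N \<phi> = S N \<phi>n" for \<phi>
  proof -
    have "S N (\<lambda>i j k. \<phi> i j k - S N \<phi>n / real N ^ 3) = S N \<phi> - S N \<phi>n"
      using S_diff[of N \<phi> "\<lambda>_ _ _. S N \<phi>n / real N ^ 3"] S_const[of N "S N \<phi>n / real N ^ 3"] as(2) by simp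
    then show ?thesis using gmean_S[OF as(1,2)] as(2) by simp
  qed
  show ?thesis
  proof (rule ex_ex1I)
    show "\<exists>\<phi>. per N \<phi> \<and>
           (\<exists>\<mu>. per N \<mu> \<and>
              (\<forall>i j k. ((3/2) * \<phi> i j k - 2 * \<phi>n i j k + (1/2) * \<phi>nm1 i j k) / dt
                         = lap (L / real N) \<mu> i j k) \<and>
              (\<forall>i j k. \<mu> i j k = ln (1 + \<phi> i j k) - ln (1 - \<phi> i j k)
                         - \<theta>0 * (2 * \<phi>n i j k - \<phi>nm1 i j k)
                         - A * dt * lap (L / real N) (\<lambda>a b c. \<phi> a b c - \<phi>n a b c) i j k
                         - \<epsilon>^2 * lap (L / real N) \<phi> i j k)) \<and>
           gmean L N (\<lambda>i j k. \<phi> i j k - gmean L N \<phi>n) = 0 \<and>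
           gsupnorm N \<phi> < 1"
      using existence unfolding gm0 gsup_lt[OF as(2)] by blast
  next
    fix \<phi>1 \<phi>2
    assume H1: "per N \<phi>1 \<and>
           (\<exists>\<mu>. per N \<mu> \<and>
              (\<forall>i j k. ((3/2) * \<phi>1 i j k - 2 * \<phi>n i j k + (1/2) * \<phi>nm1 i j k) / dt
                         = lap (L / real N) \<mu> i j k) \<and>
              (\<forall>i j k. \<mu> i j k = ln (1 + \<phi>1 i j k) - ln (1 - \<phi>1 i j k)
                         - \<theta>0 * (2 * \<phi>n i j k - \<phi>nm1 i j k)
                         - A * dt * lap (L / real N) (\<lambda>a b c. \<phi>1 a b c - \<phi>n a b c) i j k
                         - \<epsilon>^2 * lap (L / real N) \<phi>1 i j k)) \<and>
           gmean L N (\<lambda>i j k. \<phi>1 i j k - gmean L N \<phi>n) = 0 \<and>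
           gsupnorm N \<phi>1 < 1"
    assume H2: "per N \<phi>2 \<and>
           (\<exists>\<mu>. per N \<mu> \<and>
              (\<forall>i j k. ((3/2) * \<phi>2 i j k - 2 * \<phi>n i j k + (1/2) * \<phi>nm1 i j k) / dt
                         = lap (L / real N) \<mu> i j k) \<and>
              (\<forall>i j k. \<mu> i j k = ln (1 + \<phi>2 i j k) - ln (1 - \<phi>2 i j k)
                         - \<theta>0 * (2 * \<phi>n i j k - \<phi>nm1 i j k)
                         - A * dt * lap (L / real N) (\<lambda>a b c. \<phi>2 a b c - \<phi>n a b c) i j k
                         - \<epsilon>^2 * lap (L / real N) \<phi>2 i j k)) \<and>
           gmean L N (\<lambda>i j k. \<phi>2 i j k - gmean L N \<phi>n) = 0 \<and>
           gsupnorm N \<phi>2 < 1"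
    from H1 obtain \<mu>1 where m1: "per N \<mu>1"
      "\<And>i j k. ((3/2) * \<phi>1 i j k - 2 * \<phi>n i j k + (1/2) * \<phi>nm1 i j k) / dt = lap (L / real N) \<mu>1 i j k"
      "\<And>i j k. \<mu>1 i j k = ln (1 + \<phi>1 i j k) - ln (1 - \<phi>1 i j k)
                         - \<theta>0 * (2 * \<phi>n i j k - \<phi>nm1 i j k)
                         - A * dt * lap (L / real N) (\<lambda>a b c. \<phi>1 a b c - \<phi>n a b c) i j k
                         - \<epsilon>^2 * lap (L / real N) \<phi>1 i j k" by blast
    from H2 obtain \<mu>2 where m2: "per N \<mu>2"
      "\<And>i j k. ((3/2) * \<phi>2 i j k - 2 * \<phi>n i j k + (1/2) * \<phi>nm1 i j k) / dt = lap (L / real N) \<mu>2 i j k"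
      "\<And>i j k. \<mu>2 i j k = ln (1 + \<phi>2 i j k) - ln (1 - \<phi>2 i j k)
                         - \<theta>0 * (2 * \<phi>n i j k - \<phi>nm1 i j k)
                         - A * dt * lap (L / real N) (\<lambda>a b c. \<phi>2 a b c - \<phi>n a b c) i j k
                         - \<epsilon>^2 * lap (L / real N) \<phi>2 i j k" by blast
    have b1: "\<And>i j k. (i,j,k) \<in> GG N \<Longrightarrow> \<bar>\<phi>1 i j k\<bar> < 1" using H1 gsup_lt[OF as(2)] by blast
    have b2: "\<And>i j k. (i,j,k) \<in> GG N \<Longrightarrow> \<bar>\<phi>2 i j k\<bar> < 1" using H2 gsup_lt[OF as(2)] by blast
    show "\<phi>1 = \<phi>2"
      by (rule uniqueness[OF as(2) hpos as(5) as(6) _ m1(1) _ m2(1) m1(2) m1(3) m2(2) m2(3) b1 b2])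
         (use H1 H2 in auto)
  qed
qed

end
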